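(* Fix an integer $p\ge 2$ and let $x_0,x_1,x_2,\dots$ be the standard generators of the Brown–Thompson group $F_p$. In the group algebra $\mathbb{C}[F_p]$ set $$a_n:=\frac{x_n+x_n^{-1}}{\sqrt 2},\qquad s_n:=\frac{a_0+a_1+\dots+a_{n-1}}{\sqrt n}\quad(n\ge 1).$$ Then for every $d\in\mathbb N$, $$\lim_{n\to\infty}\gamma(s_n^d)=\begin{cases}(d-1)!! & d \text{ even},\\ 0 & d \text{ odd},\end{cases}$$ i.e. the moments of $s_n$ with respect to $\gamma$ converge to those of the standard normal distribution $N(0,1)$, so $s_n$ converges in distribution to a standard normal random variable.
   Context: $F_p$ is the group with presentation $\langle x_0,x_1,\dots \mid x_nx_k=x_kx_{n+p-1}\ \text{for all } k<n\rangle$, with identity $e$. The canonical trace $\gamma:\mathbb{C}[F_p]\to\mathbb{C}$ is the linear functional with $\gamma(g)=\delta_{g,e}$ for $g\in F_p$. For $d$ even, $(d-1)!!=(d-1)(d-3)\cdots 3\cdot 1$. *)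

theory Defs
  imports Complex_Main
begin

text \<open>Words in the generators: (n, True) is x_n, (n, False) is x_n inverse.\<close>
type_synonym fword = "(nat \<times> bool) list"

text \<open>One-step rewriting generating the congruence of the presentation of F_p
  (free cancellation and the defining relations x_n x_k = x_k x_(n+p-1), k < n).\<close>
inductive fp_step :: "nat \<Rightarrow> fword \<Rightarrow> fword \<Rightarrow> bool" for p where
  cancel: "fp_step p (u @ [(i, b), (i, \<not> b)] @ v) (u @ v)"
| rel: "k < n \<Longrightarrow> fp_step p (u @ [(n, True), (k, True)] @ v) (u @ [(k, True), (n + p - 1, True)] @ v)"

definition fp_eq :: "nat \<Rightarrow> fword \<Rightarrow> fword \<Rightarrow> bool" where
  "fp_eq p = (sup (fp_step p) (fp_step p)\<inverse>\<inverse>)\<^sup>*\<^sup>*"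

text \<open>Elements of F_p are equivalence classes of words.\<close>
definition fp_class :: "nat \<Rightarrow> fword \<Rightarrow> fword set" where
  "fp_class p w = {v. fp_eq p w v}"

definition fp_mult :: "nat \<Rightarrow> fword set \<Rightarrow> fword set \<Rightarrow> fword set" where
  "fp_mult p A B = fp_class p ((SOME a. a \<in> A) @ (SOME b. b \<in> B))"

text \<open>Group algebra C[F_p]: finitely supported complex functions on F_p
  (addition and scalar multiplication pointwise, product = convolution).\<close>
type_synonym fgalg = "fword set \<Rightarrow> complex"

definition fp_basis :: "nat \<Rightarrow> fword \<Rightarrow> fgalg" where
  "fp_basis p w = (\<lambda>C. if C = fp_class p w then 1 else 0)"

definition fp_conv :: "nat \<Rightarrow> fgalg \<Rightarrow> fgalg \<Rightarrow> fgalg" where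
  "fp_conv p f g = (\<lambda>C. \<Sum>A\<in>{A. f A \<noteq> 0}. \<Sum>B\<in>{B. g B \<noteq> 0}.
      if fp_mult p A B = C then f A * g B else 0)"

fun fp_pow :: "nat \<Rightarrow> fgalg \<Rightarrow> nat \<Rightarrow> fgalg" where
  "fp_pow p f 0 = fp_basis p []"
| "fp_pow p f (Suc m) = fp_conv p f (fp_pow p f m)"

text \<open>Canonical trace: coefficient of the identity.\<close>
definition fp_trace :: "nat \<Rightarrow> fgalg \<Rightarrow> complex" where
  "fp_trace p f = f (fp_class p [])"

definition fp_a :: "nat \<Rightarrow> nat \<Rightarrow> fgalg" where
  "fp_a p n = (\<lambda>C. (fp_basis p [(n, True)] C + fp_basis p [(n, False)] C) / complex_of_real (sqrt 2))"

definition fp_s :: "nat \<Rightarrow> nat \<Rightarrow> fgalg" where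
  "fp_s p n = (\<lambda>C. (\<Sum>i<n. fp_a p i C) / complex_of_real (sqrt (real n)))"

fun dfact :: "nat \<Rightarrow> nat" where
  "dfact 0 = 1"
| "dfact (Suc 0) = 1"
| "dfact (Suc (Suc n)) = Suc (Suc n) * dfact n"

end

theory Submission
  imports Defs "HOL-Library.Stream"
begin


definition Xm :: "nat \<Rightarrow> nat \<Rightarrow> nat stream \<Rightarrow> nat stream" where
  "Xm p i s = (case s of t ## s' \<Rightarrow> if t < i then s else if t \<le> p - 2 then i ## (t - i) ## s'
      else (case s' of c ## s'' \<Rightarrow> if c \<le> i then i ## (p - 1 - i + c) ## s'' else c ## s''))"

definition Ym :: "nat \<Rightarrow> nat \<Rightarrow> nat stream \<Rightarrow> nat stream" where
  "Ym p i s = (case s of t ## s' \<Rightarrow> if t < i then s else if t = i then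
      (case s' of c ## s'' \<Rightarrow> if c + i \<le> p - 2 then (i + c) ## s'' else (p - 1) ## (c + i + 1 - p) ## s'')
      else (p - 1) ## s)"

definition valid :: "nat \<Rightarrow> nat stream \<Rightarrow> bool" where
  "valid p s \<longleftrightarrow> (\<forall>x\<in>sset s. x < p)"

lemma valid_Cons[simp]: "valid p (x ## s) \<longleftrightarrow> x < p \<and> valid p s"
  by (auto simp: valid_def)

lemma stream_2: obtains t c s' where "s = t ## c ## s'"
  by (metis stream.collapse)

lemma XY:
  assumes "p \<ge> 2" "i < p - 1" "valid p s"
  shows "Ym p i (Xm p i s) = s" "valid p (Xm p i s)"
proof -
  obtain t c s' where s: "s = t ## c ## s'" by (rule stream_2)
  show "Ym p i (Xm p i s) = s" using assms unfolding s Xm_def Ym_def by auto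
  show "valid p (Xm p i s)" using assms unfolding s Xm_def by auto
qed

lemma YX:
  assumes "p \<ge> 2" "i < p - 1" "valid p s"
  shows "Xm p i (Ym p i s) = s" "valid p (Ym p i s)"
proof -
  obtain t c s' where s: "s = t ## c ## s'" by (rule stream_2)
  show "Xm p i (Ym p i s) = s" using assms unfolding s Xm_def Ym_def by auto
  show "valid p (Ym p i s)" using assms unfolding s Ym_def by auto
qed

primrec Dp :: "nat \<Rightarrow> nat \<Rightarrow> (nat stream \<Rightarrow> nat stream) \<Rightarrow> nat stream \<Rightarrow> nat stream" where
  "Dp p 0 f s = f s"
| "Dp p (Suc q) f s = (case s of t ## s' \<Rightarrow> if t = p - 1 then t ## Dp p q f s' else s)"

definition actl :: "nat \<Rightarrow> nat \<times> bool \<Rightarrow> nat stream \<Rightarrow> nat stream" where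
  "actl p l = Dp p (fst l div (p - 1)) (if snd l then Xm p (fst l mod (p - 1)) else Ym p (fst l mod (p - 1)))"

definition actw :: "nat \<Rightarrow> fword \<Rightarrow> nat stream \<Rightarrow> nat stream" where
  "actw p w = foldr (\<lambda>l f. actl p l \<circ> f) w id"

lemma actw_simps[simp]: "actw p [] = id" "actw p (l # w) = actl p l \<circ> actw p w"
  by (auto simp: actw_def)

lemma actw_append[simp]: "actw p (u @ v) = actw p u \<circ> actw p v"
  by (induction u) auto

lemma Dp_valid: "(\<And>s. valid p s \<Longrightarrow> valid p (f s)) \<Longrightarrow> valid p s \<Longrightarrow> valid p (Dp p q f s)"
proof (induction q arbitrary: s)
  case 0 then show ?case by simp
next
  case (Suc q)
  obtain t s' where "s = t ## s'" by (metis stream.collapse)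
  with Suc show ?case by auto
qed

lemma Dp_inv: "(\<And>s. valid p s \<Longrightarrow> f (g s) = s) \<Longrightarrow> (\<And>s. valid p s \<Longrightarrow> valid p (g s)) \<Longrightarrow> p \<ge> 2 \<Longrightarrow>
   valid p s \<Longrightarrow> Dp p q f (Dp p q g s) = s"
proof (induction q arbitrary: s)
  case 0 then show ?case by simp
next
  case (Suc q)
  obtain t s' where "s = t ## s'" by (metis stream.collapse)
  with Suc show ?case by auto
qed

lemma actl_valid: "p \<ge> 2 \<Longrightarrow> valid p s \<Longrightarrow> valid p (actl p l s)"
  unfolding actl_def
  by (rule Dp_valid) (auto intro: XY YX)

lemma actw_valid: "p \<ge> 2 \<Longrightarrow> valid p s \<Longrightarrow> valid p (actw p w s)"
  by (induction w) (auto intro: actl_valid)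

lemma actl_cancel: "p \<ge> 2 \<Longrightarrow> valid p s \<Longrightarrow> actl p (i, b) (actl p (i, \<not> b) s) = s"
  unfolding actl_def
  by (cases b) (auto intro!: Dp_inv intro: XY YX)

lemma actl_ge: assumes "p \<ge> 2" "j \<ge> p - 1"
  shows "actl p (j, b) s = (case s of t ## s' \<Rightarrow> if t = p - 1 then t ## actl p (j - (p - 1), b) s' else s)"
proof -
  have "j div (p - 1) = Suc ((j - (p - 1)) div (p - 1))" "j mod (p - 1) = (j - (p - 1)) mod (p - 1)"
    using assms by (auto simp: le_div_geq le_mod_geq)
  then show ?thesis by (simp only: actl_def fst_conv snd_conv Dp.simps)
qed

lemma actl_lt: assumes "j < p - 1"
  shows "actl p (j, b) s = (if b then Xm p j s else Ym p j s)"
  using assms unfolding actl_def by simp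

lemma rel_deep:
  assumes "p \<ge> 2" "k < p - 1" "valid p s"
  shows "Xm p k (Dp p 1 (Dp p 1 f) s) = Dp p 1 f (Xm p k s)"
proof -
  obtain t c s' where s: "s = t ## c ## s'" by (rule stream_2)
  show ?thesis using assms unfolding s Xm_def by auto
qed

lemma rel_root:
  assumes "p \<ge> 2" "k < n" "n < p - 1" "valid p s"
  shows "Xm p n (Xm p k s) = Xm p k (Dp p 1 (Xm p n) s)"
proof -
  obtain t c s' where s: "s = t ## c ## s'" by (rule stream_2)
  obtain d s'' where s': "s' = d ## s''" by (metis stream.collapse)
  show ?thesis using assms unfolding s s' Xm_def by auto
qed

lemma actl_ge': assumes "p \<ge> 2" "j \<ge> p - 1"
  shows "actl p (j, b) = Dp p 1 (actl p (j - (p - 1), b))"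
proof
  fix x :: "nat stream"
  obtain t s' where x: "x = t ## s'" by (metis stream.collapse)
  show "actl p (j, b) x = Dp p 1 (actl p (j - (p - 1), b)) x"
    unfolding actl_ge[OF assms] x by (simp add: One_nat_def)
qed

lemma actl_rel:
  assumes "p \<ge> 2" "k < n" "valid p s"
  shows "actl p (n, True) (actl p (k, True) s) = actl p (k, True) (actl p (n + p - 1, True) s)"
  using assms(2,3)
proof (induction k arbitrary: n s rule: less_induct)
  case (less k)
  show ?case
  proof (cases "k \<ge> p - 1")
    case True
    obtain t s' where s: "s = t ## s'" by (metis stream.collapse)
    have e: "n + p - 1 - (p - 1) = n - (p - 1) + p - 1" using True less.prems assms by auto
    have IH: "actl p (n - (p - 1), True) (actl p (k - (p - 1), True) s') =
      actl p (k - (p - 1), True) (actl p (n - (p - 1) + p - 1, True) s')"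
      using less.IH[of "k - (p - 1)" "n - (p - 1)" s'] less.prems True assms s by auto
    have a: "actl p (n, True) = Dp p 1 (actl p (n - (p - 1), True))"
      "actl p (k, True) = Dp p 1 (actl p (k - (p - 1), True))"
      "actl p (n + p - 1, True) = Dp p 1 (actl p (n + p - 1 - (p - 1), True))"
      using actl_ge'[OF assms(1)] True less.prems by auto
    show ?thesis unfolding a e using IH by (simp add: s)
  next
    case False
    then have k: "actl p (k, True) = Xm p k" using actl_lt by (auto simp: fun_eq_iff)
    show ?thesis
    proof (cases "n \<ge> p - 1")
      case True
      have a1: "actl p (n, True) = Dp p 1 (actl p (n - (p - 1), True))"
        using actl_ge'[OF assms(1)] True by auto
      have "n + p - 1 - (p - 1) = n" using assms by auto
      then have "actl p (n + p - 1, True) = Dp p 1 (actl p (n, True))"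
        using actl_ge'[OF assms(1), of "n + p - 1" True] True by auto
      have a: "actl p (n, True) = Dp p 1 (actl p (n - (p - 1), True))"
        "actl p (n + p - 1, True) = Dp p 1 (Dp p 1 (actl p (n - (p - 1), True)))"
        using a1 \<open>actl p (n + p - 1, True) = Dp p 1 (actl p (n, True))\<close> by auto
      show ?thesis unfolding a k using rel_deep assms less.prems False by auto
    next
      case nF: False
      have an: "actl p (n, True) = Xm p n" using actl_lt[of n p True] nF by (auto simp: fun_eq_iff)
      have "n + p - 1 - (p - 1) = n" using assms by auto
      then have "actl p (n + p - 1, True) = Dp p 1 (actl p (n, True))"
        using actl_ge'[OF assms(1), of "n + p - 1" True] by auto
      then have a: "actl p (n, True) = Xm p n"
        "actl p (n + p - 1, True) = Dp p 1 (Xm p n)" using an by simp_all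
      show ?thesis unfolding a k using rel_root assms less.prems False nF by auto
    qed
  qed
qed

lemma fp_step_act: "fp_step p w w' \<Longrightarrow> p \<ge> 2 \<Longrightarrow> valid p s \<Longrightarrow> actw p w s = actw p w' s"
proof (induction rule: fp_step.induct)
  case (cancel u i b v)
  then show ?case using actl_cancel[of p _ i b] actw_valid by simp
next
  case (rel k n u v)
  then show ?case using actl_rel[of p k n] actw_valid by simp
qed

lemma fp_eq_act: assumes "fp_eq p w w'" "p \<ge> 2" "valid p s" shows "actw p w s = actw p w' s"
proof -
  have "(sup (fp_step p) (fp_step p)\<inverse>\<inverse>)\<^sup>*\<^sup>* w w'" using assms(1) by (simp add: fp_eq_def)
  then show ?thesis
  proof (induction rule: rtranclp_induct)
    case base then show ?case by simp
  next
    case (step y z)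
    then show ?case using fp_step_act[of p y z s] fp_step_act[of p z y s] assms by auto
  qed
qed

definition ecnt :: "(nat \<Rightarrow> bool) \<Rightarrow> fword \<Rightarrow> int" where
  "ecnt P w = sum_list (map (\<lambda>l. if P (fst l) then (if snd l then 1 else -1) else 0) w)"

lemma ecnt_simps[simp]: "ecnt P [] = 0"
  "ecnt P (l # w) = (if P (fst l) then (if snd l then 1 else -1) else 0) + ecnt P w"
  "ecnt P (u @ v) = ecnt P u + ecnt P v"
  by (auto simp: ecnt_def)

lemma ecnt_abs: "\<bar>ecnt P w\<bar> \<le> int (length w)"
  by (induction w) auto

definition zpt :: "nat \<Rightarrow> nat \<Rightarrow> nat \<Rightarrow> nat stream" where
  "zpt p a N = replicate (a div (p - 1)) (p - 1) @- ((a mod (p - 1)) ## (replicate N 0 @- (1 ## sconst 0)))"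

lemma Dp_rep: "Dp p q f (replicate q (p - 1) @- s) = replicate q (p - 1) @- f s"
  by (induction q) auto

lemma Dp_rep_fix: "q < q' \<Longrightarrow> r \<noteq> p - 1 \<Longrightarrow>
   Dp p q' f (replicate q (p - 1) @- (r ## s)) = replicate q (p - 1) @- (r ## s)"
proof (induction q arbitrary: q')
  case 0 then show ?case by (cases q') auto
next
  case (Suc q) then show ?case by (cases q') auto
qed

lemma zpt_valid: assumes "p \<ge> 2" shows "valid p (zpt p a N)"
proof -
  have "a mod (p - 1) < p - 1" using assms by simp
  then have "a mod (p - 1) < p" by linarith
  then show ?thesis using assms unfolding zpt_def valid_def by auto
qed

lemma zpt_other:
  assumes "p \<ge> 2" "a < j"
  shows "actl p (j, b) (zpt p a N) = zpt p a N"
proof -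
  let ?q = "a div (p - 1)" and ?r = "a mod (p - 1)" and ?q' = "j div (p - 1)" and ?r' = "j mod (p - 1)"
  have r: "?r < p - 1" using assms by auto
  have "?q < ?q' \<or> (?q = ?q' \<and> ?r < ?r')"
  proof (rule ccontr)
    assume "\<not> ?thesis"
    then have "?q' < ?q \<or> (?q = ?q' \<and> ?r' \<le> ?r)" by auto
    then have "j \<le> a"
    proof
      assume "?q' < ?q"
      then have "?q' + 1 \<le> ?q" by simp
      then have "(?q' + 1) * (p - 1) \<le> ?q * (p - 1)" by (rule mult_right_mono) simp
      moreover have "j < (?q' + 1) * (p - 1)"
      proof -
        have "?r' < p - 1" using assms by simp
        moreover have "j = ?q' * (p - 1) + ?r'" by (metis div_mult_mod_eq)
        moreover have "\<And>r D q (j::nat). r < D \<Longrightarrow> j = q * D + r \<Longrightarrow> j < (q + 1) * D" by simp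
        ultimately show ?thesis by blast
      qed
      moreover have "?q * (p - 1) \<le> a" by (metis div_mult_mod_eq le_add1)
      ultimately show ?thesis by linarith
    next
      assume "?q = ?q' \<and> ?r' \<le> ?r"
      then show ?thesis by (metis add_le_mono1 div_mult_mod_eq add_le_cancel_left)
    qed
    with assms show False by simp
  qed
  then show ?thesis
  proof
    assume "?q < ?q'"
    then show ?thesis unfolding actl_def zpt_def fst_conv using r by (intro Dp_rep_fix) auto
  next
    assume h: "?q = ?q' \<and> ?r < ?r'"
    then show ?thesis unfolding actl_def zpt_def fst_conv snd_conv h[THEN conjunct1, symmetric] Dp_rep
      by (auto simp: Xm_def Ym_def)
  qed
qed

lemma zpt_up: assumes "p \<ge> 2" shows "actl p (a, True) (zpt p a N) = zpt p a (Suc N)"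
proof -
  have "a mod (p - 1) < p - 1" using assms by simp
  then have "a mod (p - 1) \<le> p - 2" by linarith
  then show ?thesis unfolding actl_def zpt_def fst_conv snd_conv Dp_rep by (simp add: Xm_def)
qed

lemma zpt_down: assumes "p \<ge> 2" shows "actl p (a, False) (zpt p a (Suc N)) = zpt p a N"
proof -
  have "a mod (p - 1) < p - 1" using assms by simp
  then have "a mod (p - 1) \<le> p - 2" by linarith
  then show ?thesis unfolding actl_def zpt_def fst_conv snd_conv Dp_rep by (simp add: Ym_def)
qed

lemma rep_snth: "(replicate N 0 @- (1 ## s)) !! k = (if k < N then 0 else if k = N then 1 else s !! (k - N - 1))"
proof -
  have "k > N \<Longrightarrow> k - N = Suc (k - N - 1)" by arith
  then show ?thesis by (auto simp: shift_snth)
qed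

lemma zpt_inj: "zpt p a N = zpt p a M \<Longrightarrow> N = M"
proof (rule ccontr)
  assume h: "zpt p a N = zpt p a M" "N \<noteq> M"
  then have e: "replicate N 0 @- (1 ## sconst 0) = replicate M (0::nat) @- (1 ## sconst 0)"
    unfolding zpt_def by simp
  show False
  proof (cases "N < M")
    case True
    have "(replicate N 0 @- (1 ## sconst 0)) !! N = (replicate M (0::nat) @- (1 ## sconst 0)) !! N"
      using e by simp
    then show False using True by (simp only: rep_snth) simp
  next
    case False
    then have "M < N" using h by simp
    have "(replicate N 0 @- (1 ## sconst 0)) !! M = (replicate M (0::nat) @- (1 ## sconst 0)) !! M"
      using e by simp
    then show False using \<open>M < N\<close> by (simp only: rep_snth) simp
  qed
qed

lemma actw_zpt:
  assumes "p \<ge> 2" "\<forall>l\<in>set w. a \<le> fst l" "length w \<le> N"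
  shows "actw p w (zpt p a N) = zpt p a (nat (int N + ecnt (\<lambda>j. j = a) w))"
  using assms(2,3)
proof (induction w arbitrary: N)
  case Nil then show ?case by simp
next
  case (Cons l w)
  obtain j b where l: "l = (j, b)" by (cases l)
  have IH: "actw p w (zpt p a N) = zpt p a (nat (int N + ecnt (\<lambda>j. j = a) w))"
    using Cons by auto
  have "\<bar>ecnt (\<lambda>j. j = a) w\<bar> \<le> int (length w)" by (rule ecnt_abs)
  then have ge: "int N + ecnt (\<lambda>j. j = a) w \<ge> 1" using Cons.prems by auto
  define M where "M = nat (int N + ecnt (\<lambda>j. j = a) w)"
  have M1: "M \<ge> 1" using ge by (simp add: M_def)
  show ?case
  proof (cases "j = a")
    case True
    show ?thesis
    proof (cases b)
      case True
      then show ?thesis using \<open>j = a\<close> IH zpt_up[OF assms(1)] ge unfolding l M_def[symmetric]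
        by (simp add: M_def nat_add_distrib[symmetric] Suc_as_int ac_simps)
    next
      case False
      obtain M' where M': "M = Suc M'" using M1 by (cases M) auto
      have "nat (int N + ecnt (\<lambda>j. j = a) (l # w)) = M'" using \<open>j = a\<close> False M' ge
        unfolding l M_def by simp
      then show ?thesis using \<open>j = a\<close> False IH zpt_down[OF assms(1), of a M'] M' unfolding l M_def
        by simp
    qed
  next
    case False
    then have "a < j" using Cons.prems l by auto
    then show ?thesis using IH zpt_other[OF assms(1)] False unfolding l by simp
  qed
qed

theorem min_letter_balanced:
  assumes "p \<ge> 2" "fp_eq p w []" "\<forall>l\<in>set w. a \<le> fst l"
  shows "ecnt (\<lambda>j. j = a) w = 0"
proof -
  have "actw p w (zpt p a (length w)) = actw p [] (zpt p a (length w))"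
    using fp_eq_act[OF assms(2,1) zpt_valid[OF assms(1)]] by simp
  then have "zpt p a (nat (int (length w) + ecnt (\<lambda>j. j = a) w)) = zpt p a (length w)"
    using actw_zpt[OF assms(1,3), of "length w"] by simp
  then have "nat (int (length w) + ecnt (\<lambda>j. j = a) w) = length w" by (rule zpt_inj)
  moreover have "\<bar>ecnt (\<lambda>j. j = a) w\<bar> \<le> int (length w)" by (rule ecnt_abs)
  ultimately show ?thesis by linarith
qed

lemma fp_step_tot: "fp_step p w w' \<Longrightarrow> ecnt (\<lambda>_. True) w = ecnt (\<lambda>_. True) w'"
  by (induction rule: fp_step.induct) auto

lemma fp_eq_tot: assumes "fp_eq p w w'" shows "ecnt (\<lambda>_. True) w = ecnt (\<lambda>_. True) w'"
proof -
  have "(sup (fp_step p) (fp_step p)\<inverse>\<inverse>)\<^sup>*\<^sup>* w w'" using assms(1) by (simp add: fp_eq_def)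
  then show ?thesis
    by (induction rule: rtranclp_induct) (auto dest!: fp_step_tot)
qed



lemma fp_eq_refl[simp]: "fp_eq p w w"
  by (simp add: fp_eq_def)

lemma fp_eq_sym: "fp_eq p u v \<Longrightarrow> fp_eq p v u"
proof -
  assume "fp_eq p u v"
  then have "(sup (fp_step p) (fp_step p)\<inverse>\<inverse>)\<^sup>*\<^sup>* u v" by (simp add: fp_eq_def)
  then have "(sup (fp_step p) (fp_step p)\<inverse>\<inverse>)\<^sup>*\<^sup>* v u"
  proof (induction rule: rtranclp_induct)
    case base then show ?case by simp
  next
    case (step y z)
    then have "(sup (fp_step p) (fp_step p)\<inverse>\<inverse>) z y" by auto
    then show ?case using step.IH by (rule converse_rtranclp_into_rtranclp)
  qed
  then show ?thesis by (simp add: fp_eq_def)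
qed

lemma fp_eq_trans: "fp_eq p u v \<Longrightarrow> fp_eq p v w \<Longrightarrow> fp_eq p u w"
  unfolding fp_eq_def by (rule rtranclp_trans)

lemma fp_step_ctx: "fp_step p u v \<Longrightarrow> fp_step p (x @ u @ y) (x @ v @ y)"
proof (induction rule: fp_step.induct)
  case (cancel u i b v)
  then show ?case using fp_step.cancel[of p "x @ u" i b "v @ y"] by simp
next
  case (rel k n u v)
  then show ?case using fp_step.rel[of k n p "x @ u" "v @ y"] by simp
qed

lemma fp_eq_ctx: "fp_eq p u v \<Longrightarrow> fp_eq p (x @ u @ y) (x @ v @ y)"
proof -
  assume "fp_eq p u v"
  then have "(sup (fp_step p) (fp_step p)\<inverse>\<inverse>)\<^sup>*\<^sup>* u v" by (simp add: fp_eq_def)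
  then have "(sup (fp_step p) (fp_step p)\<inverse>\<inverse>)\<^sup>*\<^sup>* (x @ u @ y) (x @ v @ y)"
  proof (induction rule: rtranclp_induct)
    case base then show ?case by simp
  next
    case (step y' z)
    then have "(sup (fp_step p) (fp_step p)\<inverse>\<inverse>) (x @ y' @ y) (x @ z @ y)"
      by (auto intro: fp_step_ctx)
    with step.IH show ?case by (rule rtranclp.rtrancl_into_rtrancl)
  qed
  then show ?thesis by (simp add: fp_eq_def)
qed

lemma fp_eq_app: "fp_eq p u u' \<Longrightarrow> fp_eq p v v' \<Longrightarrow> fp_eq p (u @ v) (u' @ v')"
  using fp_eq_ctx[of p u u' "[]" v] fp_eq_ctx[of p v v' u' "[]"] by (auto intro: fp_eq_trans)

lemma fp_eq_cancel: "fp_eq p ([(i, b), (i, \<not> b)]) []"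
proof -
  have "fp_step p ([] @ [(i, b), (i, \<not> b)] @ []) ([] @ [])" by (rule fp_step.cancel)
  then show ?thesis by (auto simp: fp_eq_def)
qed

lemma fp_eq_cancelF: "fp_eq p ([(i, False), (i, True)]) []"
  using fp_eq_cancel[of p i False] by simp

lemma fp_eq_cancelT: "fp_eq p ([(i, True), (i, False)]) []"
  using fp_eq_cancel[of p i True] by simp

lemma fp_eq_rel: "k < n \<Longrightarrow> fp_eq p [(n, True), (k, True)] [(k, True), (n + p - 1, True)]"
proof -
  assume "k < n"
  then have "fp_step p ([] @ [(n, True), (k, True)] @ []) ([] @ [(k, True), (n + p - 1, True)] @ [])"
    by (rule fp_step.rel)
  then show ?thesis by (auto simp: fp_eq_def)
qed

definition sg :: "nat \<Rightarrow> fword \<Rightarrow> fword" where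
  "sg p w = map (\<lambda>l. (fst l + (p - 1), snd l)) w"

definition usg :: "nat \<Rightarrow> fword \<Rightarrow> fword" where
  "usg p w = map (\<lambda>l. (fst l - (p - 1), snd l)) w"

lemma sg_simps[simp]: "sg p [] = []" "sg p (l # w) = (fst l + (p - 1), snd l) # sg p w"
  "sg p (u @ v) = sg p u @ sg p v" "length (sg p w) = length w"
  by (auto simp: sg_def)

lemma usg_simps[simp]: "usg p [] = []" "usg p (l # w) = (fst l - (p - 1), snd l) # usg p w"
  "usg p (u @ v) = usg p u @ usg p v" "length (usg p w) = length w"
  by (auto simp: usg_def)

lemma usg_sg[simp]: "usg p (sg p w) = w"
  by (induction w) auto

lemma sg_usg: "\<forall>l\<in>set w. p - 1 \<le> fst l \<Longrightarrow> sg p (usg p w) = w"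
  by (induction w) auto

lemma set_sg: "l \<in> set (sg p w) \<longleftrightarrow> (\<exists>l'\<in>set w. l = (fst l' + (p - 1), snd l'))"
  by (auto simp: sg_def)

lemma set_usg: "l \<in> set (usg p w) \<longleftrightarrow> (\<exists>l'\<in>set w. l = (fst l' - (p - 1), snd l'))"
  by (auto simp: usg_def)

lemma conj_letter:
  assumes "a < j" "p \<ge> 2"
  shows "fp_eq p [(a, False), (j, b), (a, True)] [(j + (p - 1), b)]"
proof (cases b)
  case True
  have "fp_eq p ([(a, False)] @ [(j, True), (a, True)] @ []) ([(a, False)] @ [(a, True), (j + p - 1, True)] @ [])"
    by (rule fp_eq_ctx) (rule fp_eq_rel[OF assms(1)])
  moreover have "fp_eq p ([] @ [(a, False), (a, True)] @ [(j + p - 1, True)]) ([] @ [] @ [(j + p - 1, True)])"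
    by (rule fp_eq_ctx) (rule fp_eq_cancelF)
  ultimately show ?thesis using True assms by (auto intro: fp_eq_trans)
next
  case False
  let ?J = "j + p - 1"
  have 1: "fp_eq p [(a, False), (j, False), (a, True)] [(a, False), (j, False), (a, True), (?J, True), (?J, False)]"
    using fp_eq_ctx[OF fp_eq_cancelT[of p ?J], of "[(a, False), (j, False), (a, True)]" "[]"]
    by (auto intro: fp_eq_sym)
  have 2: "fp_eq p [(a, False), (j, False), (a, True), (?J, True), (?J, False)] [(a, False), (j, False), (j, True), (a, True), (?J, False)]"
    using fp_eq_ctx[OF fp_eq_rel[OF assms(1), of p], of "[(a, False), (j, False)]" "[(?J, False)]"]
    by (auto intro: fp_eq_sym)
  have 3: "fp_eq p [(a, False), (j, False), (j, True), (a, True), (?J, False)] [(a, False), (a, True), (?J, False)]"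
    using fp_eq_ctx[OF fp_eq_cancelF[of p j], of "[(a, False)]" "[(a, True), (?J, False)]"] by simp
  have 4: "fp_eq p [(a, False), (a, True), (?J, False)] [(?J, False)]"
    using fp_eq_ctx[OF fp_eq_cancelF[of p a], of "[]" "[(?J, False)]"] by simp
  show ?thesis using 1 2 3 4 False assms by (auto intro: fp_eq_trans)
qed

lemma conj_word:
  assumes "\<forall>l\<in>set v. a < fst l" "p \<ge> 2"
  shows "fp_eq p ([(a, False)] @ v @ [(a, True)]) (sg p v)"
  using assms(1)
proof (induction v)
  case Nil then show ?case using fp_eq_cancelF[of p a] by simp
next
  case (Cons l v)
  obtain j b where l: "l = (j, b)" by (cases l)
  have "fp_eq p ([(a, False), l] @ [] @ v @ [(a, True)]) ([(a, False), l] @ [(a, True), (a, False)] @ v @ [(a, True)])"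
    using fp_eq_ctx[OF fp_eq_cancelT[of p a], of "[(a, False), l]" "v @ [(a, True)]"] by (auto intro: fp_eq_sym)
  moreover have "fp_eq p ([] @ [(a, False), l, (a, True)] @ ((a, False) # v @ [(a, True)])) ([] @ [(j + (p - 1), b)] @ ((a, False) # v @ [(a, True)]))"
    using Cons.prems l conj_letter[of a j p b] assms(2) by (intro fp_eq_ctx) auto
  moreover have "fp_eq p ([(j + (p - 1), b)] @ ([(a, False)] @ v @ [(a, True)]) @ []) ([(j + (p - 1), b)] @ sg p v @ [])"
    using Cons by (intro fp_eq_ctx) auto
  ultimately show ?case using l by (auto intro: fp_eq_trans)
qed

lemma E1:
  assumes "\<forall>l\<in>set v. a < fst l" "p \<ge> 2"
  shows "fp_eq p (u @ [(a, False)] @ v @ [(a, True)] @ t) (u @ sg p v @ t)"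
  using fp_eq_ctx[OF conj_word[OF assms], of u t] by simp

lemma conj_triv: "fp_eq p x [] \<longleftrightarrow> fp_eq p ([(a, False)] @ x @ [(a, True)]) []"
proof
  assume "fp_eq p x []"
  then have "fp_eq p ([(a, False)] @ x @ [(a, True)]) ([(a, False)] @ [] @ [(a, True)])" by (rule fp_eq_ctx)
  then show "fp_eq p ([(a, False)] @ x @ [(a, True)]) []" using fp_eq_cancelF[of p a] by (auto intro: fp_eq_trans)
next
  assume h: "fp_eq p ([(a, False)] @ x @ [(a, True)]) []"
  have c: "fp_eq p [] [(a, True), (a, False)]" by (rule fp_eq_sym) (rule fp_eq_cancelT)
  have "fp_eq p ([] @ x @ []) ([(a, True), (a, False)] @ x @ [(a, True), (a, False)])"
    using c by (intro fp_eq_app) auto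
  moreover have "fp_eq p ([(a, True)] @ ([(a, False)] @ x @ [(a, True)]) @ [(a, False)]) ([(a, True)] @ [] @ [(a, False)])"
    using h by (rule fp_eq_ctx)
  ultimately show "fp_eq p x []" using fp_eq_cancelT[of p a] by simp (meson fp_eq_trans)
qed

lemma E2:
  assumes "\<forall>l\<in>set u. a < fst l" "\<forall>l\<in>set t. a < fst l" "p \<ge> 2"
  shows "fp_eq p (u @ [(a, True)] @ v @ [(a, False)] @ t) [] \<longleftrightarrow> fp_eq p (sg p u @ v @ sg p t) []"
proof -
  have "fp_eq p ([(a, False)] @ (u @ [(a, True)] @ v @ [(a, False)] @ t) @ [(a, True)])
      (([(a, False)] @ u @ [(a, True)]) @ v @ ([(a, False)] @ t @ [(a, True)]))" by simp
  moreover have "fp_eq p (([(a, False)] @ u @ [(a, True)]) @ v @ ([(a, False)] @ t @ [(a, True)])) (sg p u @ v @ sg p t)"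
    using conj_word[OF assms(1,3)] conj_word[OF assms(2,3)] by (intro fp_eq_app) auto
  ultimately have e: "fp_eq p ([(a, False)] @ (u @ [(a, True)] @ v @ [(a, False)] @ t) @ [(a, True)]) (sg p u @ v @ sg p t)"
    by (rule fp_eq_trans)
  show ?thesis unfolding conj_triv[of p "u @ [(a, True)] @ v @ [(a, False)] @ t" a]
    using e by (meson fp_eq_sym fp_eq_trans)
qed



definition wset :: "nat \<Rightarrow> nat \<Rightarrow> nat \<Rightarrow> fword set" where
  "wset lo hi k = {w. length w = k \<and> (\<forall>l\<in>set w. lo \<le> fst l \<and> fst l < hi)}"

definition Triv :: "nat \<Rightarrow> nat \<Rightarrow> nat \<Rightarrow> nat \<Rightarrow> fword set" where
  "Triv p m lo hi = {w \<in> wset lo hi (2 * m). fp_eq p w []}"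

definition TrivC :: "nat \<Rightarrow> nat \<Rightarrow> nat \<Rightarrow> nat \<Rightarrow> fword set" where
  "TrivC p m a hi = {w \<in> Triv p m a hi. \<exists>l\<in>set w. fst l = a}"

lemma finite_wset: "finite (wset lo hi k)"
proof -
  have "wset lo hi k \<subseteq> {xs. set xs \<subseteq> {lo..<hi} \<times> UNIV \<and> length xs = k}"
    by (auto simp: wset_def)
  moreover have "finite {xs. set xs \<subseteq> {lo..<hi} \<times> (UNIV :: bool set) \<and> length xs = k}"
    by (rule finite_lists_length_eq) simp
  ultimately show ?thesis by (rule finite_subset)
qed

lemma finite_Triv: "finite (Triv p m lo hi)"
  unfolding Triv_def using finite_wset by simp

lemma finite_TrivC: "finite (TrivC p m a hi)"
  unfolding TrivC_def using finite_Triv by simp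

lemma comb:
  "(\<exists>u v t. w = u @ [(a, False)] @ v @ [(a, True)] @ t \<and> (\<forall>l\<in>set v. fst l \<noteq> a)) \<or>
   (\<exists>k. map snd (filter (\<lambda>l. fst l = a) w) = replicate k True @ replicate (length (filter (\<lambda>l. fst l = a) w) - k) False)"
proof (induction w)
  case Nil then show ?case by simp
next
  case (Cons l w)
  obtain j b where l: "l = (j, b)" by (cases l)
  from Cons.IH show ?case
  proof
    assume "\<exists>u v t. w = u @ [(a, False)] @ v @ [(a, True)] @ t \<and> (\<forall>l\<in>set v. fst l \<noteq> a)"
    then obtain u v t where "w = u @ [(a, False)] @ v @ [(a, True)] @ t" "\<forall>l\<in>set v. fst l \<noteq> a" by blast
    then have "l # w = (l # u) @ [(a, False)] @ v @ [(a, True)] @ t" by simp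
    with \<open>\<forall>l\<in>set v. fst l \<noteq> a\<close> show ?thesis by blast
  next
    assume "\<exists>k. map snd (filter (\<lambda>l. fst l = a) w) = replicate k True @ replicate (length (filter (\<lambda>l. fst l = a) w) - k) False"
    then obtain k where k: "map snd (filter (\<lambda>l. fst l = a) w) = replicate k True @ replicate (length (filter (\<lambda>l. fst l = a) w) - k) False" by blast
    have kle: "k \<le> length (filter (\<lambda>l. fst l = a) w)"
      using arg_cong[OF k, of length] by simp
    show ?thesis
    proof (cases "j = a")
      case False
      then show ?thesis using k l by auto
    next
      case True
      show ?thesis
      proof (cases b)
        case True
        then have "map snd (filter (\<lambda>l. fst l = a) (l # w)) = replicate (Suc k) True @ replicate (length (filter (\<lambda>l. fst l = a) (l # w)) - Suc k) False"
          using k l \<open>j = a\<close> by simp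
        then show ?thesis by blast
      next
        case False
        show ?thesis
        proof (cases k)
          case 0
          then have "map snd (filter (\<lambda>l. fst l = a) (l # w)) = replicate 0 True @ replicate (length (filter (\<lambda>l. fst l = a) (l # w)) - 0) False"
            using k l \<open>j = a\<close> False by simp
          then show ?thesis by blast
        next
          case (Suc k')
          obtain x xs where fx: "filter (\<lambda>l. fst l = a) w = x # xs"
            using kle Suc by (cases "filter (\<lambda>l. fst l = a) w") auto
          have "snd x = True" using k fx Suc by simp
          from filter_eq_ConsD[OF fx] obtain us vs where
            "w = us @ x # vs" "\<forall>u\<in>set us. fst u \<noteq> a" "fst x = a" by blast
          then have "x = (a, True)" using \<open>snd x = True\<close> by (cases x) auto
          then have "l # w = [] @ [(a, False)] @ us @ [(a, True)] @ vs"
            using \<open>w = us @ x # vs\<close> l \<open>j = a\<close> False by simp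
          with \<open>\<forall>u\<in>set us. fst u \<noteq> a\<close> show ?thesis by blast
        qed
      qed
    qed
  qed
qed

lemma ecnt_filter: "ecnt (\<lambda>j. j = a) w = sum_list (map (\<lambda>b. if b then 1 else -1) (map snd (filter (\<lambda>l. fst l = a) w)))"
  by (induction w) auto

lemma dec:
  assumes "p \<ge> 2" "fp_eq p w []" "\<forall>l\<in>set w. a \<le> fst l" "\<exists>l\<in>set w. fst l = a"
  shows "(\<exists>u v t. w = u @ [(a, False)] @ v @ [(a, True)] @ t \<and> (\<forall>l\<in>set v. a < fst l)) \<or>
         (\<exists>u v t. w = u @ [(a, True)] @ v @ [(a, False)] @ t \<and> (\<forall>l\<in>set u. a < fst l) \<and> (\<forall>l\<in>set t. a < fst l))"
proof -
  have bal: "ecnt (\<lambda>j. j = a) w = 0" by (rule min_letter_balanced[OF assms(1-3)])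
  from comb[of w a] show ?thesis
  proof
    assume "\<exists>u v t. w = u @ [(a, False)] @ v @ [(a, True)] @ t \<and> (\<forall>l\<in>set v. fst l \<noteq> a)"
    then obtain u v t where "w = u @ [(a, False)] @ v @ [(a, True)] @ t" "\<forall>l\<in>set v. fst l \<noteq> a" by blast
    moreover then have "\<forall>l\<in>set v. a < fst l" using assms(3) by (metis Un_iff le_neq_implies_less set_append)
    ultimately show ?thesis by blast
  next
    assume "\<exists>k. map snd (filter (\<lambda>l. fst l = a) w) = replicate k True @ replicate (length (filter (\<lambda>l. fst l = a) w) - k) False"
    then obtain k where k: "map snd (filter (\<lambda>l. fst l = a) w) = replicate k True @ replicate (length (filter (\<lambda>l. fst l = a) w) - k) False" by blast
    define L where "L = length (filter (\<lambda>l. fst l = a) w)"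
    have kle: "k \<le> L" using arg_cong[OF k, of length] by (simp add: L_def)
    have "ecnt (\<lambda>j. j = a) w = int k - int (L - k)"
      unfolding ecnt_filter k L_def[symmetric] by (simp add: sum_list_replicate)
    with bal kle have Lk: "L = 2 * k" by linarith
    have "L \<noteq> 0" using assms(4) unfolding L_def by (auto simp: filter_empty_conv)
    then have k1: "k \<ge> 1" using Lk by simp
    obtain x xs where fx: "filter (\<lambda>l. fst l = a) w = x # xs"
      using \<open>L \<noteq> 0\<close> L_def by (cases "filter (\<lambda>l. fst l = a) w") auto
    have sx: "snd x = True" using k fx k1 by (cases k) auto
    have xs: "map snd xs = replicate (k - 1) True @ replicate (L - k) False"
      using k fx k1 unfolding L_def[symmetric] by (cases k) auto
    from filter_eq_ConsD[OF fx] obtain us r where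
      w: "w = us @ x # r" and us: "\<forall>u\<in>set us. fst u \<noteq> a" "fst x = a" and xsr: "xs = filter (\<lambda>l. fst l = a) r" by blast
    have x: "x = (a, True)" using sx us by (cases x) auto
    have "L - k \<ge> 1" using Lk k1 by simp
    then obtain n' where n': "L - k = Suc n'" by (cases "L - k") auto
    have "rev (map snd xs) = replicate (L - k) False @ replicate (k - 1) True" unfolding xs by simp
    then have "rev (map snd xs) = False # (replicate n' False @ replicate (k - 1) True)"
      unfolding n' by simp
    then have m: "map snd (rev xs) = False # (replicate n' False @ replicate (k - 1) True)" by (simp add: rev_map)
    obtain y ys where ry: "rev xs = y # ys" using m by (cases "rev xs") auto
    have sy: "snd y = False" using m ry by simp
    have fy: "filter (\<lambda>l. fst l = a) (rev r) = y # ys" using ry xsr by (simp add: rev_filter)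
    from filter_eq_ConsD[OF fy] obtain ts vs where
      r: "rev r = ts @ y # vs" and ts: "\<forall>u\<in>set ts. fst u \<noteq> a" "fst y = a" by blast
    have y: "y = (a, False)" using sy ts by (cases y) auto
    have "r = rev vs @ [y] @ rev ts" using arg_cong[OF r, of rev] by simp
    then have "w = us @ [(a, True)] @ rev vs @ [(a, False)] @ rev ts" using w x y by simp
    moreover have "\<forall>l\<in>set us. a < fst l" "\<forall>l\<in>set (rev ts). a < fst l"
    proof -
      show "\<forall>l\<in>set us. a < fst l" using us assms(3) w by (metis Un_iff le_neq_implies_less set_append)
      show "\<forall>l\<in>set (rev ts). a < fst l" using ts assms(3) w \<open>r = rev vs @ [y] @ rev ts\<close>
        by (metis Un_iff le_neq_implies_less set_append set_rev list.set_intros(2))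
    qed
    ultimately show ?thesis by blast
  qed
qed



definition R :: "nat \<Rightarrow> bool \<Rightarrow> nat \<Rightarrow> nat \<Rightarrow> nat \<Rightarrow> fword \<Rightarrow> fword" where
  "R p ty a i j w' = (if ty then take i w' @ [(a, False)] @ usg p (take (j - 1 - i) (drop i w')) @ [(a, True)] @ drop (j - 1) w'
     else usg p (take i w') @ [(a, True)] @ take (j - 1 - i) (drop i w') @ [(a, False)] @ usg p (drop (j - 1) w'))"

definition PP :: "nat \<Rightarrow> (nat \<times> nat) set" where
  "PP m = {(i, j). i < j \<and> j < 2 * m}"

lemma finite_PP: "finite (PP m)"
  by (rule finite_subset[of _ "{..<2*m} \<times> {..<2*m}"]) (auto simp: PP_def)

lemma R1_rep: "R p True a (length u) (length u + length v + 1) (u @ sg p v @ t) = u @ [(a, False)] @ v @ [(a, True)] @ t"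
  by (simp add: R_def)

lemma R2_rep: "R p False a (length u) (length u + length v + 1) (sg p u @ v @ sg p t) = u @ [(a, True)] @ v @ [(a, False)] @ t"
  by (simp add: R_def)

lemma gt_of_nofilter: "\<forall>l\<in>set (x::fword). a \<le> fst l \<Longrightarrow> filter (\<lambda>l. fst l = a) x = [] \<Longrightarrow> \<forall>l\<in>set x. a < fst l"
proof
  fix l assume "\<forall>l\<in>set x. a \<le> fst l" "filter (\<lambda>l. fst l = a) x = []" "l \<in> set x"
  then have "a \<le> fst l" "fst l \<noteq> a" by (auto simp: filter_empty_conv)
  then show "a < fst l" by simp
qed

lemma sg_ball: "(\<forall>l\<in>set (sg p x). Q l) \<longleftrightarrow> (\<forall>l\<in>set x. Q (fst l + (p - 1), snd l))"
  by (auto simp: sg_def)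

lemma sg_gt: "\<forall>l\<in>set x. a < fst l \<Longrightarrow> \<forall>l\<in>set (sg p x). a < fst l"
  unfolding sg_ball by auto

lemma cnt_app: "length (filter P (u @ v)) = length (filter P u) + length (filter P v)" by simp

lemma core:
  assumes p: "p \<ge> 2" and tr: "fp_eq p w []" and rng: "\<forall>l\<in>set w. a \<le> fst l \<and> fst l < hi"
    and has: "\<exists>l\<in>set w. fst l = a" and len: "length w = 2 * m"
  shows "\<exists>ij\<in>PP m. \<exists>ty w'. w = R p ty a (fst ij) (snd ij) w' \<and> fp_eq p w' [] \<and> length w' = 2 * (m - 1) \<and>
     (\<forall>l\<in>set w'. a \<le> fst l \<and> fst l < hi + p - 1) \<and>
     (length (filter (\<lambda>l. fst l = a) w) = 2 \<longrightarrow> (\<forall>l\<in>set w'. a < fst l)) \<and>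
     (length (filter (\<lambda>l. fst l = a) w) \<noteq> 2 \<longrightarrow> (\<exists>l\<in>set w'. fst l = a))"
proof -
  have ge: "\<forall>l\<in>set w. a \<le> fst l" using rng by auto
  from dec[OF p tr ge has] show ?thesis
  proof
    assume "\<exists>u v t. w = u @ [(a, False)] @ v @ [(a, True)] @ t \<and> (\<forall>l\<in>set v. a < fst l)"
    then obtain u v t where w: "w = u @ [(a, False)] @ v @ [(a, True)] @ t" and v: "\<forall>l\<in>set v. a < fst l" by blast
    define w' where "w' = u @ sg p v @ t"
    have "fp_eq p w w'" unfolding w w'_def by (rule E1[OF v p])
    then have t': "fp_eq p w' []" using tr by (meson fp_eq_sym fp_eq_trans)
    have ij: "(length u, length u + length v + 1) \<in> PP m" using len w by (simp add: PP_def)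
    have l': "length w' = 2 * (m - 1)" using len w by (simp add: w'_def)
    have r': "\<forall>l\<in>set w'. a \<le> fst l \<and> fst l < hi + p - 1" using rng unfolding w w'_def
      using p by (simp only: set_append ball_Un sg_ball fst_conv) auto
    have cv: "filter (\<lambda>l. fst l = a) v = []" using v by (auto simp: filter_empty_conv)
    have c2: "length (filter (\<lambda>l. fst l = a) w) = 2 \<longrightarrow> (\<forall>l\<in>set w'. a < fst l)"
    proof
      assume "length (filter (\<lambda>l. fst l = a) w) = 2"
      then have "filter (\<lambda>l. fst l = a) u = []" "filter (\<lambda>l. fst l = a) t = []" using cv unfolding w by auto
      moreover have "\<forall>l\<in>set u. a \<le> fst l" "\<forall>l\<in>set t. a \<le> fst l" using rng unfolding w by auto
      ultimately show "\<forall>l\<in>set w'. a < fst l" using sg_gt[OF v, of p] gt_of_nofilter unfolding w'_def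
        by (metis Un_iff set_append)
    qed
    have c3: "length (filter (\<lambda>l. fst l = a) w) \<noteq> 2 \<longrightarrow> (\<exists>l\<in>set w'. fst l = a)"
    proof
      assume "length (filter (\<lambda>l. fst l = a) w) \<noteq> 2"
      then have "filter (\<lambda>l. fst l = a) u \<noteq> [] \<or> filter (\<lambda>l. fst l = a) t \<noteq> []" using cv unfolding w by auto
      then show "\<exists>l\<in>set w'. fst l = a" unfolding w'_def by (auto simp: filter_empty_conv)
    qed
    show ?thesis using ij t' l' r' c2 c3 R1_rep[of p a u v t] unfolding w w'_def[symmetric]
      by (intro bexI[OF _ ij]) (metis fst_conv snd_conv w'_def)
  next
    assume "\<exists>u v t. w = u @ [(a, True)] @ v @ [(a, False)] @ t \<and> (\<forall>l\<in>set u. a < fst l) \<and> (\<forall>l\<in>set t. a < fst l)"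
    then obtain u v t where w: "w = u @ [(a, True)] @ v @ [(a, False)] @ t" and u: "\<forall>l\<in>set u. a < fst l"
      and t: "\<forall>l\<in>set t. a < fst l" by blast
    define w' where "w' = sg p u @ v @ sg p t"
    have t': "fp_eq p w' []" using E2[OF u t p, of v] tr unfolding w w'_def by simp
    have ij: "(length u, length u + length v + 1) \<in> PP m" using len w by (simp add: PP_def)
    have l': "length w' = 2 * (m - 1)" using len w by (simp add: w'_def)
    have r': "\<forall>l\<in>set w'. a \<le> fst l \<and> fst l < hi + p - 1" using rng unfolding w w'_def
      using p by (simp only: set_append ball_Un sg_ball fst_conv) auto
    have cu: "filter (\<lambda>l. fst l = a) u = []" "filter (\<lambda>l. fst l = a) t = []" using u t by (auto simp: filter_empty_conv)
    have c2: "length (filter (\<lambda>l. fst l = a) w) = 2 \<longrightarrow> (\<forall>l\<in>set w'. a < fst l)"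
    proof
      assume "length (filter (\<lambda>l. fst l = a) w) = 2"
      then have "filter (\<lambda>l. fst l = a) v = []" using cu unfolding w by auto
      moreover have "\<forall>l\<in>set v. a \<le> fst l" using rng unfolding w by auto
      ultimately show "\<forall>l\<in>set w'. a < fst l" using sg_gt[OF u, of p] sg_gt[OF t, of p] gt_of_nofilter unfolding w'_def
        by (metis Un_iff set_append)
    qed
    have c3: "length (filter (\<lambda>l. fst l = a) w) \<noteq> 2 \<longrightarrow> (\<exists>l\<in>set w'. fst l = a)"
    proof
      assume "length (filter (\<lambda>l. fst l = a) w) \<noteq> 2"
      then have "filter (\<lambda>l. fst l = a) v \<noteq> []" using cu unfolding w by auto
      then show "\<exists>l\<in>set w'. fst l = a" unfolding w'_def by (auto simp: filter_empty_conv)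
    qed
    show ?thesis using ij t' l' r' c2 c3 R2_rep[of p a u v t] unfolding w w'_def[symmetric]
      by (intro bexI[OF _ ij]) (metis fst_conv snd_conv w'_def)
  qed
qed

lemma card_cover:
  fixes F :: "bool \<Rightarrow> nat \<times> nat \<Rightarrow> fword \<Rightarrow> fword"
  assumes "\<And>w. w \<in> X \<Longrightarrow> \<exists>ij\<in>PP m. \<exists>ty w'. w = F ty ij w' \<and> w' \<in> S" "finite S"
  shows "card X \<le> 2 * card (PP m) * card S"
proof -
  have "X \<subseteq> (\<Union>ij\<in>PP m. \<Union>ty\<in>{True, False}. F ty ij ` S)"
  proof
    fix w assume "w \<in> X"
    from assms(1)[OF this] obtain ij ty w' where "ij \<in> PP m" "w = F ty ij w'" "w' \<in> S" by blast
    then show "w \<in> (\<Union>ij\<in>PP m. \<Union>ty\<in>{True, False}. F ty ij ` S)" by (cases ty) auto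
  qed
  then have "card X \<le> card (\<Union>ij\<in>PP m. \<Union>ty\<in>{True, False}. F ty ij ` S)"
    by (rule card_mono[rotated]) (auto intro: finite_PP assms(2))
  also have "\<dots> \<le> (\<Sum>ij\<in>PP m. card (\<Union>ty\<in>{True, False}. F ty ij ` S))"
    by (rule card_UN_le[OF finite_PP])
  also have "\<dots> \<le> (\<Sum>ij\<in>PP m. 2 * card S)"
  proof (rule sum_mono)
    fix ij
    have "card (\<Union>ty\<in>{True, False}. F ty ij ` S) \<le> (\<Sum>ty\<in>{True, False}. card (F ty ij ` S))"
      by (rule card_UN_le) simp
    also have "\<dots> \<le> (\<Sum>ty\<in>{True, False}. card S)" by (rule sum_mono) (rule card_image_le[OF assms(2)])
    finally show "card (\<Union>ty\<in>{True, False}. F ty ij ` S) \<le> 2 * card S" by simp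
  qed
  finally show ?thesis by (simp add: mult.assoc)
qed

lemma D_upper:
  assumes p: "p \<ge> 2" and m: "m \<ge> 1"
  shows "card (TrivC p m a hi) \<le> 2 * card (PP m) * card (Triv p (m - 1) a (hi + p - 1))"
proof (rule card_cover[where F = "\<lambda>ty ij. R p ty a (fst ij) (snd ij)"])
  fix w assume "w \<in> TrivC p m a hi"
  then have w: "fp_eq p w []" "\<forall>l\<in>set w. a \<le> fst l \<and> fst l < hi" "\<exists>l\<in>set w. fst l = a" "length w = 2 * m"
    by (auto simp: TrivC_def Triv_def wset_def)
  from core[OF p w] obtain ij ty w' where "ij \<in> PP m" "w = R p ty a (fst ij) (snd ij) w'"
    "fp_eq p w' []" "length w' = 2 * (m - 1)" "\<forall>l\<in>set w'. a \<le> fst l \<and> fst l < hi + p - 1" by blast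
  then show "\<exists>ij\<in>PP m. \<exists>ty w'. w = R p ty a (fst ij) (snd ij) w' \<and> w' \<in> Triv p (m - 1) a (hi + p - 1)"
    by (auto simp: Triv_def wset_def)
qed (rule finite_Triv)

lemma N_upper:
  assumes p: "p \<ge> 2" and m: "m \<ge> 1"
  shows "card (Triv p m lo hi) \<le> (\<Sum>a\<in>{lo..<hi}. 2 * card (PP m) *
     (card (Triv p (m - 1) (a + 1) (hi + p - 1)) + card (TrivC p (m - 1) a (hi + p - 1))))"
proof -
  let ?X = "\<lambda>a. {w \<in> Triv p m lo hi. Min (fst ` set w) = a}"
  have "Triv p m lo hi \<subseteq> (\<Union>a\<in>{lo..<hi}. ?X a)"
  proof
    fix w assume w: "w \<in> Triv p m lo hi"
    then have "w \<noteq> []" using m by (auto simp: Triv_def wset_def)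
    then have "Min (fst ` set w) \<in> fst ` set w" by (intro Min_in) auto
    then have "Min (fst ` set w) \<in> {lo..<hi}" using w by (auto simp: Triv_def wset_def)
    then show "w \<in> (\<Union>a\<in>{lo..<hi}. ?X a)" using w by auto
  qed
  then have "card (Triv p m lo hi) \<le> card (\<Union>a\<in>{lo..<hi}. ?X a)"
    by (rule card_mono[rotated]) (auto intro: finite_subset[OF _ finite_Triv])
  also have "\<dots> \<le> (\<Sum>a\<in>{lo..<hi}. card (?X a))" by (rule card_UN_le) simp
  also have "\<dots> \<le> (\<Sum>a\<in>{lo..<hi}. 2 * card (PP m) *
     (card (Triv p (m - 1) (a + 1) (hi + p - 1)) + card (TrivC p (m - 1) a (hi + p - 1))))"
  proof (rule sum_mono)
    fix a
    let ?S = "Triv p (m - 1) (a + 1) (hi + p - 1) \<union> TrivC p (m - 1) a (hi + p - 1)"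
    have "card (?X a) \<le> 2 * card (PP m) * card ?S"
    proof (rule card_cover[where F = "\<lambda>ty ij. R p ty a (fst ij) (snd ij)"])
      fix w assume "w \<in> ?X a"
      then have w0: "w \<in> Triv p m lo hi" "Min (fst ` set w) = a" by auto
      then have "w \<noteq> []" using m by (auto simp: Triv_def wset_def)
      then have amem: "a \<in> fst ` set w" using w0 Min_in[of "fst ` set w"] by auto
      have age: "\<forall>l\<in>set w. a \<le> fst l" using w0(2) by (auto intro: Min_le)
      have ex: "\<exists>l\<in>set w. fst l = a" using amem by (metis imageE)
      have w: "fp_eq p w []" "\<forall>l\<in>set w. a \<le> fst l \<and> fst l < hi" "\<exists>l\<in>set w. fst l = a" "length w = 2 * m"
        using w0 age ex by (auto simp: Triv_def wset_def)
      from core[OF p w] obtain ij ty w' where c: "ij \<in> PP m" "w = R p ty a (fst ij) (snd ij) w'"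
        "fp_eq p w' []" "length w' = 2 * (m - 1)" "\<forall>l\<in>set w'. a \<le> fst l \<and> fst l < hi + p - 1"
        "length (filter (\<lambda>l. fst l = a) w) = 2 \<longrightarrow> (\<forall>l\<in>set w'. a < fst l)"
        "length (filter (\<lambda>l. fst l = a) w) \<noteq> 2 \<longrightarrow> (\<exists>l\<in>set w'. fst l = a)" by blast
      have "w' \<in> ?S"
      proof (cases "length (filter (\<lambda>l. fst l = a) w) = 2")
        case True
        then have "\<forall>l\<in>set w'. a + 1 \<le> fst l \<and> fst l < hi + p - 1" using c by auto
        then show ?thesis using c by (auto simp: Triv_def wset_def)
      next
        case False
        then show ?thesis using c by (auto simp: Triv_def TrivC_def wset_def)
      qed
      then show "\<exists>ij\<in>PP m. \<exists>ty w'. w = R p ty a (fst ij) (snd ij) w' \<and> w' \<in> ?S" using c by blast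
    qed (auto intro: finite_Triv finite_TrivC)
    also have "\<dots> \<le> 2 * card (PP m) * (card (Triv p (m - 1) (a + 1) (hi + p - 1)) + card (TrivC p (m - 1) a (hi + p - 1)))"
      by (intro mult_left_mono card_Un_le) simp
    finally show "card (?X a) \<le> \<dots>" .
  qed
  finally show ?thesis .
qed

lemma split_unique:
  "u1 @ x1 # r1 = u2 @ x2 # r2 \<Longrightarrow> P x1 \<Longrightarrow> P x2 \<Longrightarrow> \<forall>l\<in>set u1. \<not> P l \<Longrightarrow> \<forall>l\<in>set u2. \<not> P l \<Longrightarrow>
   u1 = u2 \<and> x1 = x2 \<and> r1 = r2"
proof (induction u1 arbitrary: u2)
  case Nil then show ?case by (cases u2) auto
next
  case (Cons y u1) then show ?case by (cases u2) auto
qed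

lemma take_mid_drop: "i \<le> k \<Longrightarrow> take i w @ take (k - i) (drop i w) @ drop k w = w"
proof -
  assume "i \<le> k"
  have "take (k - i) (drop i w) @ drop (k - i) (drop i w) = drop i w" by (rule append_take_drop_id)
  moreover have "drop (k - i) (drop i w) = drop (k - i + i) w" by (simp only: drop_drop)
  moreover have "k - i + i = k" using \<open>i \<le> k\<close> by simp
  ultimately show ?thesis by (metis append_take_drop_id)
qed

lemma Rdecomp:
  assumes "i < j" "j < 2 * m" "length w' = 2 * (m - 1)" "\<forall>l\<in>set w'. a + p \<le> fst l" "p \<ge> 2"
  shows "\<exists>U V T. R p ty a i j w' = U @ [(a, \<not> ty)] @ V @ [(a, ty)] @ T \<and> length U = i \<and> length V = j - 1 - i
    \<and> (\<forall>l\<in>set (U @ V @ T). a < fst l) \<and> w' = (if ty then U @ sg p V @ T else sg p U @ V @ sg p T)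
    \<and> set (U @ V @ T) \<subseteq> set w' \<union> set (usg p w')"
proof -
  let ?u = "take i w'" and ?v = "take (j - 1 - i) (drop i w')" and ?t = "drop (j - 1) w'"
  have w': "w' = ?u @ ?v @ ?t" using take_mid_drop[of i "j - 1" w'] assms by simp
  have lu: "length ?u = i" "length ?v = j - 1 - i" using assms by auto
  have pl: "\<forall>l\<in>set w'. p - 1 \<le> fst l" using assms by auto
  have gt: "\<forall>l\<in>set w'. a < fst l" "\<forall>l\<in>set (usg p w'). a < fst l" using assms by (auto simp: usg_def)
  have sub: "set ?u \<subseteq> set w'" "set ?v \<subseteq> set w'" "set ?t \<subseteq> set w'"
    by (auto dest: in_set_takeD in_set_dropD)
  have usub: "set (usg p ?u) \<subseteq> set (usg p w')" "set (usg p ?v) \<subseteq> set (usg p w')" "set (usg p ?t) \<subseteq> set (usg p w')"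
    using sub by (auto simp: usg_def)
  show ?thesis
  proof (cases ty)
    case True
    have "\<forall>l\<in>set ?v. p - 1 \<le> fst l" using pl sub by blast
    then have "sg p (usg p ?v) = ?v" by (rule sg_usg)
    then have "w' = ?u @ sg p (usg p ?v) @ ?t" using w' by simp
    have r: "R p ty a i j w' = ?u @ [(a, \<not> ty)] @ usg p ?v @ [(a, ty)] @ ?t" using True by (simp add: R_def)
    have g: "\<forall>l\<in>set (?u @ usg p ?v @ ?t). a < fst l" using gt sub usub by auto
    have s: "set (?u @ usg p ?v @ ?t) \<subseteq> set w' \<union> set (usg p w')" using sub usub by auto
    show ?thesis using r g s lu True \<open>w' = ?u @ sg p (usg p ?v) @ ?t\<close>
      by (intro exI[of _ ?u] exI[of _ "usg p ?v"] exI[of _ ?t]) simp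
  next
    case False
    have A: "\<forall>l\<in>set ?u. p - 1 \<le> fst l" "\<forall>l\<in>set ?t. p - 1 \<le> fst l" using pl sub by blast+
    have "sg p (usg p ?u) = ?u" using A(1) by (rule sg_usg)
    moreover have "sg p (usg p ?t) = ?t" using A(2) by (rule sg_usg)
    ultimately have "sg p (usg p ?u) = ?u" "sg p (usg p ?t) = ?t" by auto
    then have "w' = sg p (usg p ?u) @ ?v @ sg p (usg p ?t)" using w' by simp
    have r: "R p ty a i j w' = usg p ?u @ [(a, \<not> ty)] @ ?v @ [(a, ty)] @ usg p ?t" using False by (simp add: R_def)
    have g: "\<forall>l\<in>set (usg p ?u @ ?v @ usg p ?t). a < fst l" using gt sub usub by auto
    have s: "set (usg p ?u @ ?v @ usg p ?t) \<subseteq> set w' \<union> set (usg p w')" using sub usub by auto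
    show ?thesis using r g s lu False \<open>w' = sg p (usg p ?u) @ ?v @ sg p (usg p ?t)\<close>
      by (intro exI[of _ "usg p ?u"] exI[of _ ?v] exI[of _ "usg p ?t"]) simp
  qed
qed

lemma ge_of: assumes "\<forall>l\<in>set (U @ V @ T). a < fst l" "w = U @ [x] @ V @ [y] @ T" "fst x = a" "fst y = (a::nat)"
  shows "\<forall>l\<in>set w. a \<le> fst l"
proof
  fix l assume "l \<in> set w"
  then have "l \<in> set (U @ V @ T) \<or> l = x \<or> l = y" using assms(2) by auto
  then show "a \<le> fst l" using assms by (metis less_imp_le order_refl)
qed

lemma N_lower:
  assumes p: "p \<ge> 2" and m: "m \<ge> 1"
  shows "(\<Sum>a\<in>{lo..<hi}. 2 * card (PP m) * card (Triv p (m - 1) (a + p) hi)) \<le> card (Triv p m lo hi)"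
proof -
  define Dom where "Dom = (SIGMA a:{lo..<hi}. SIGMA ij:PP m. SIGMA ty:(UNIV::bool set). Triv p (m - 1) (a + p) hi)"
  define Phi where "Phi = (\<lambda>(a, ij, ty, w'). R p ty a (fst ij) (snd ij) w')"
  have cardDom: "card Dom = (\<Sum>a\<in>{lo..<hi}. 2 * card (PP m) * card (Triv p (m - 1) (a + p) hi))"
  proof -
    have "card Dom = (\<Sum>a\<in>{lo..<hi}. card (SIGMA ij:PP m. SIGMA ty:(UNIV::bool set). Triv p (m - 1) (a + p) hi))"
      unfolding Dom_def by (rule card_SigmaI) (auto intro!: finite_SigmaI finite_PP finite_Triv)
    also have "\<dots> = (\<Sum>a\<in>{lo..<hi}. 2 * card (PP m) * card (Triv p (m - 1) (a + p) hi))"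
    proof (rule sum.cong[OF refl])
      fix a
      have "card (SIGMA ij:PP m. SIGMA ty:(UNIV::bool set). Triv p (m - 1) (a + p) hi) =
        (\<Sum>ij\<in>PP m. card (SIGMA ty:(UNIV::bool set). Triv p (m - 1) (a + p) hi))"
        by (rule card_SigmaI) (auto intro!: finite_SigmaI finite_PP finite_Triv)
      also have "\<dots> = (\<Sum>ij\<in>PP m. 2 * card (Triv p (m - 1) (a + p) hi))"
        by (simp add: card_cartesian_product)
      finally show "card (SIGMA ij:PP m. SIGMA ty:(UNIV::bool set). Triv p (m - 1) (a + p) hi) =
        2 * card (PP m) * card (Triv p (m - 1) (a + p) hi)" by simp
    qed
    finally show ?thesis .
  qed
  have props: "\<exists>U V T. Phi x = U @ [(a, \<not> ty)] @ V @ [(a, ty)] @ T \<and> length U = i \<and> length V = j - 1 - i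
    \<and> (\<forall>l\<in>set (U @ V @ T). a < fst l) \<and> w' = (if ty then U @ sg p V @ T else sg p U @ V @ sg p T)
    \<and> (\<forall>l\<in>set (U @ V @ T). fst l < hi) \<and> i < j"
    if x: "x \<in> Dom" "x = (a, (i, j), ty, w')" for x a i j ty w'
  proof -
    have d: "a \<in> {lo..<hi}" "(i, j) \<in> PP m" "w' \<in> Triv p (m - 1) (a + p) hi" using x by (auto simp: Dom_def)
    then have ij: "i < j" "j < 2 * m" and w': "length w' = 2 * (m - 1)" "\<forall>l\<in>set w'. a + p \<le> fst l \<and> fst l < hi"
      by (auto simp: PP_def Triv_def wset_def)
    from Rdecomp[OF ij w'(1) _ p, of a ty] w'(2) obtain U V T where
      r: "R p ty a i j w' = U @ [(a, \<not> ty)] @ V @ [(a, ty)] @ T" "length U = i" "length V = j - 1 - i"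
        "\<forall>l\<in>set (U @ V @ T). a < fst l" "w' = (if ty then U @ sg p V @ T else sg p U @ V @ sg p T)"
        "set (U @ V @ T) \<subseteq> set w' \<union> set (usg p w')" by blast
    have "\<forall>l\<in>set (usg p w'). fst l < hi" using w'(2) by (auto simp: usg_def)
    then have "\<forall>l\<in>set (U @ V @ T). fst l < hi" using r(6) w'(2) by blast
    then show ?thesis using r ij x(2) unfolding Phi_def by auto
  qed
  have img: "Phi ` Dom \<subseteq> Triv p m lo hi"
  proof
    fix w assume "w \<in> Phi ` Dom"
    then obtain x where x: "x \<in> Dom" "w = Phi x" by blast
    obtain a i j ty w' where xx: "x = (a, (i, j), ty, w')" by (cases x) auto
    have d: "a \<in> {lo..<hi}" "w' \<in> Triv p (m - 1) (a + p) hi" using x xx by (auto simp: Dom_def)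
    from props[OF x(1) xx] obtain U V T where
      r: "Phi x = U @ [(a, \<not> ty)] @ V @ [(a, ty)] @ T"
        "\<forall>l\<in>set (U @ V @ T). a < fst l" "w' = (if ty then U @ sg p V @ T else sg p U @ V @ sg p T)"
        "\<forall>l\<in>set (U @ V @ T). fst l < hi" by blast
    have tw': "fp_eq p w' []" "length w' = 2 * (m - 1)" using d by (auto simp: Triv_def wset_def)
    have tr: "fp_eq p w []"
    proof (cases ty)
      case True
      have "fp_eq p w w'" using E1[of V a p U T] r True x(2) p by simp
      then show ?thesis using tw' fp_eq_trans by blast
    next
      case False
      have "\<forall>l\<in>set U. a < fst l" "\<forall>l\<in>set T. a < fst l" using r(2) by auto
      from E2[OF this p, of V] show ?thesis using tw' r False x(2) by simp
    qed
    have len: "length w = 2 * m" using tw'(2) r m x(2) by (cases ty) auto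
    have g: "\<forall>l\<in>set (U @ V @ T). lo \<le> fst l \<and> fst l < hi"
    proof
      fix l assume "l \<in> set (U @ V @ T)"
      then have "a < fst l" "fst l < hi" using r(2) r(4) by blast+
      then show "lo \<le> fst l \<and> fst l < hi" using d(1) by auto
    qed
    have "\<forall>l\<in>set w. lo \<le> fst l \<and> fst l < hi"
    proof
      fix l assume "l \<in> set w"
      then have "l \<in> set (U @ V @ T) \<or> fst l = a" using x(2) r(1) by auto
      then show "lo \<le> fst l \<and> fst l < hi" using g d(1) by auto
    qed
    then show "w \<in> Triv p m lo hi" using tr len by (auto simp: Triv_def wset_def)
  qed
  have inj: "inj_on Phi Dom"
  proof (rule inj_onI)
    fix x1 x2 assume x1: "x1 \<in> Dom" and x2: "x2 \<in> Dom" and e: "Phi x1 = Phi x2"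
    obtain a1 i1 j1 ty1 w1 where xx1: "x1 = (a1, (i1, j1), ty1, w1)" by (cases x1) auto
    obtain a2 i2 j2 ty2 w2 where xx2: "x2 = (a2, (i2, j2), ty2, w2)" by (cases x2) auto
    from props[OF x1 xx1] obtain U1 V1 T1 where
      r1: "Phi x1 = U1 @ [(a1, \<not> ty1)] @ V1 @ [(a1, ty1)] @ T1" "length U1 = i1" "length V1 = j1 - 1 - i1"
        "\<forall>l\<in>set (U1 @ V1 @ T1). a1 < fst l" "w1 = (if ty1 then U1 @ sg p V1 @ T1 else sg p U1 @ V1 @ sg p T1)" "i1 < j1"
      by blast
    from props[OF x2 xx2] obtain U2 V2 T2 where
      r2: "Phi x2 = U2 @ [(a2, \<not> ty2)] @ V2 @ [(a2, ty2)] @ T2" "length U2 = i2" "length V2 = j2 - 1 - i2"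
        "\<forall>l\<in>set (U2 @ V2 @ T2). a2 < fst l" "w2 = (if ty2 then U2 @ sg p V2 @ T2 else sg p U2 @ V2 @ sg p T2)" "i2 < j2"
      by blast
    have ge1: "\<forall>l\<in>set (Phi x1). a1 \<le> fst l" using ge_of[OF r1(4) r1(1)] by simp
    have ge2: "\<forall>l\<in>set (Phi x2). a2 \<le> fst l" using ge_of[OF r2(4) r2(1)] by simp
    have "(a2, \<not> ty2) \<in> set (Phi x1)" unfolding e r2(1) by simp
    then have "a1 \<le> a2" using ge1 by fastforce
    moreover have "(a1, \<not> ty1) \<in> set (Phi x2)" unfolding e[symmetric] r1(1) by simp
    then have "a2 \<le> a1" using ge2 by fastforce
    ultimately have a: "a1 = a2" by simp
    have e2: "U1 @ (a1, \<not> ty1) # (V1 @ [(a1, ty1)] @ T1) = U2 @ (a1, \<not> ty2) # (V2 @ [(a1, ty2)] @ T2)"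
      using e r1(1) r2(1) a by simp
    have nU: "\<forall>l\<in>set U1. \<not> fst l = a1" "\<forall>l\<in>set U2. \<not> fst l = a1"
      "\<forall>l\<in>set V1. \<not> fst l = a1" "\<forall>l\<in>set V2. \<not> fst l = a1" using r1(4) r2(4) a by auto
    from split_unique[OF e2, of "\<lambda>l. fst l = a1"] nU
    have u: "U1 = U2" "ty1 = ty2" and rest: "V1 @ (a1, ty1) # T1 = V2 @ (a1, ty2) # T2" by auto
    from split_unique[OF rest, of "\<lambda>l. fst l = a1"] nU
    have v: "V1 = V2" "T1 = T2" by auto
    have "i1 = i2" using r1(2) r2(2) u by simp
    moreover have "j1 = j2" using r1(3,6) r2(3,6) v \<open>i1 = i2\<close> by simp
    moreover have "w1 = w2" using r1(5) r2(5) u v by simp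
    ultimately show "x1 = x2" using xx1 xx2 a u by simp
  qed
  have "card Dom = card (Phi ` Dom)" using inj by (simp add: card_image)
  also have "\<dots> \<le> card (Triv p m lo hi)" by (rule card_mono[OF finite_Triv img])
  finally show ?thesis using cardDom by simp
qed



lemma sum_lt_double: "(\<Sum>j<2 * m. j) = (m::nat) * (2 * m - 1)"
proof (induction m)
  case 0 then show ?case by simp
next
  case (Suc m)
  have "(\<Sum>j<2 * Suc m. j) = (\<Sum>j<2 * m. j) + 2 * m + (2 * m + 1)"
    by (simp add: numeral_2_eq_2)
  also have "\<dots> = m * (2 * m - 1) + 4 * m + 1" using Suc.IH by simp
  also have "\<dots> = Suc m * (2 * Suc m - 1)" by (cases m) (auto simp: algebra_simps)
  finally show ?case .
qed

lemma card_PP: "card (PP m) = m * (2 * m - 1)"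
proof -
  have "PP m = (\<lambda>(j, i). (i, j)) ` (SIGMA j:{..<2 * m}. {..<j})"
    by (auto simp: PP_def image_iff)
  moreover have "inj_on (\<lambda>(j, i). (i, j)) (SIGMA j:{..<2 * m}. {..<j})"
    by (auto simp: inj_on_def)
  ultimately have "card (PP m) = card (SIGMA j:{..<2 * m}. {..<j})" by (simp add: card_image)
  also have "\<dots> = (\<Sum>j<2 * m. j)" by simp
  finally show ?thesis using sum_lt_double by simp
qed

definition cc :: "nat \<Rightarrow> nat" where "cc m = 2 ^ m * dfact (2 * m - 1)"

definition KK :: "nat \<Rightarrow> nat" where "KK m = 2 * card (PP m)"

lemma KK_eq: "KK m = 2 * m * (2 * m - 1)"
  by (simp add: KK_def card_PP)

lemma cc_rec: "m \<ge> 1 \<Longrightarrow> m * cc m = KK m * cc (m - 1)"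
proof -
  assume "m \<ge> 1"
  then obtain k where m: "m = Suc k" by (cases m) auto
  have d: "dfact (2 * m - 1) = (2 * m - 1) * dfact (2 * (m - 1) - 1)"
  proof (cases k)
    case 0 then show ?thesis using m by simp
  next
    case (Suc k')
    then have "2 * m - 1 = Suc (Suc (2 * k' + 1))" "2 * (m - 1) - 1 = 2 * k' + 1" using m by auto
    then show ?thesis by simp
  qed
  show ?thesis unfolding cc_def KK_eq d using m by (simp add: algebra_simps)
qed

lemma P1: "((x::nat) + 1) ^ (j + 1) \<le> x ^ (j + 1) + (j + 1) * (x + 1) ^ j"
proof (induction j)
  case 0 then show ?case by simp
next
  case (Suc j)
  have "(x + 1) ^ (Suc j + 1) = (x + 1) * (x + 1) ^ (j + 1)" by simp
  also have "\<dots> \<le> (x + 1) * (x ^ (j + 1) + (j + 1) * (x + 1) ^ j)" using Suc by (intro mult_left_mono) auto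
  also have "\<dots> = x ^ (Suc j + 1) + x ^ (j + 1) + (j + 1) * (x + 1) ^ (j + 1)" by (simp add: algebra_simps)
  also have "\<dots> \<le> x ^ (Suc j + 1) + (x + 1) ^ (j + 1) + (j + 1) * (x + 1) ^ (j + 1)"
    using power_mono[of x "x + 1" "j + 1"] by linarith
  also have "\<dots> = x ^ (Suc j + 1) + (Suc j + 1) * (x + 1) ^ Suc j" by simp
  finally show ?case .
qed

lemma P2: "(x::nat) ^ (j + 1) + (j + 1) * x ^ j \<le> (x + 1) ^ (j + 1)"
proof (induction j)
  case 0 then show ?case by simp
next
  case (Suc j)
  have "x ^ (Suc j + 1) + (Suc j + 1) * x ^ Suc j \<le> x ^ (Suc j + 1) + (j + 1) * x ^ (j + 1) + x ^ (j + 1) + (j + 1) * x ^ j"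
    by (simp add: algebra_simps)
  also have "\<dots> = (x + 1) * (x ^ (j + 1) + (j + 1) * x ^ j)" by (simp add: algebra_simps)
  also have "\<dots> \<le> (x + 1) * (x + 1) ^ (j + 1)" using Suc by (intro mult_left_mono) auto
  finally show ?case by simp
qed

lemma SL: "(j + 1) * (\<Sum>t\<in>{1..L}. (t - B) ^ j) \<ge> (L - B) ^ (j + 1)"
proof (induction L)
  case 0 then show ?case by simp
next
  case (Suc L)
  have "(Suc L - B) ^ (j + 1) \<le> (L - B) ^ (j + 1) + (j + 1) * (Suc L - B) ^ j"
  proof (cases "B \<le> L")
    case True
    then have "Suc L - B = (L - B) + 1" by simp
    then show ?thesis using P1[of "L - B" j] by simp
  next
    case False
    then have "Suc L - B = 0" by simp
    then show ?thesis by simp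
  qed
  also have "\<dots> \<le> (j + 1) * (\<Sum>t\<in>{1..L}. (t - B) ^ j) + (j + 1) * (Suc L - B) ^ j" using Suc by simp
  also have "\<dots> = (j + 1) * (\<Sum>t\<in>{1..Suc L}. (t - B) ^ j)" by (simp add: algebra_simps)
  finally show ?case .
qed

lemma SU: "(j + 1) * (\<Sum>t\<in>{1..L}. (t + C) ^ j) \<le> (L + C + 1) ^ (j + 1)"
proof (induction L)
  case 0 then show ?case by simp
next
  case (Suc L)
  have "(j + 1) * (\<Sum>t\<in>{1..Suc L}. (t + C) ^ j) = (j + 1) * (\<Sum>t\<in>{1..L}. (t + C) ^ j) + (j + 1) * (L + C + 1) ^ j"
    by (simp add: algebra_simps)
  also have "\<dots> \<le> (L + C + 1) ^ (j + 1) + (j + 1) * (L + C + 1) ^ j" using Suc by simp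
  also have "\<dots> \<le> (L + C + 1 + 1) ^ (j + 1)" by (rule P2)
  finally show ?case by simp
qed

lemma reindex: fixes f :: "nat \<Rightarrow> nat" shows "(\<Sum>a\<in>{lo..<hi}. f (hi - a)) = (\<Sum>t\<in>{1..hi - lo}. f t)"
  by (rule sum.reindex_bij_witness[of _ "\<lambda>t. hi - t" "\<lambda>a. hi - a"]) auto

lemma Triv0: "Triv p 0 lo hi = {[]}"
  by (auto simp: Triv_def wset_def)

lemma TrivC0: "TrivC p 0 a hi = {}"
  by (auto simp: TrivC_def Triv_def wset_def)

lemma LB: assumes p: "p \<ge> 2"
  shows "cc m * (hi - lo - m * p) ^ m \<le> card (Triv p m lo hi)"
proof (induction m arbitrary: lo hi)
  case 0 then show ?case by (simp add: Triv0 cc_def)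
next
  case (Suc m')
  let ?m = "Suc m'"
  have "KK ?m * cc m' * (\<Sum>a\<in>{lo..<hi}. (hi - a - ?m * p) ^ m') =
      (\<Sum>a\<in>{lo..<hi}. KK ?m * (cc m' * (hi - (a + p) - m' * p) ^ m'))"
  proof -
    have "\<And>a. hi - a - ?m * p = hi - (a + p) - m' * p" by simp
    then show ?thesis by (simp add: sum_distrib_left mult.assoc)
  qed
  also have "\<dots> \<le> (\<Sum>a\<in>{lo..<hi}. KK ?m * card (Triv p m' (a + p) hi))"
    by (intro sum_mono mult_left_mono Suc.IH) simp
  also have "\<dots> \<le> card (Triv p ?m lo hi)"
    using N_lower[OF p, where m="?m" and lo=lo and hi=hi] by (simp add: KK_def mult.assoc)
  finally have A: "KK ?m * cc m' * (\<Sum>a\<in>{lo..<hi}. (hi - a - ?m * p) ^ m') \<le> card (Triv p ?m lo hi)" .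
  have "(\<Sum>a\<in>{lo..<hi}. (hi - a - ?m * p) ^ m') = (\<Sum>t\<in>{1..hi - lo}. (t - ?m * p) ^ m')"
    using reindex[where f="\<lambda>t. (t - ?m * p) ^ m'" and lo=lo and hi=hi] by simp
  then have "(hi - lo - ?m * p) ^ ?m \<le> ?m * (\<Sum>a\<in>{lo..<hi}. (hi - a - ?m * p) ^ m')"
    using SL[where j=m' and L="hi - lo" and B="?m * p"] by simp
  then have "KK ?m * cc m' * (hi - lo - ?m * p) ^ ?m \<le> ?m * (KK ?m * cc m' * (\<Sum>a\<in>{lo..<hi}. (hi - a - ?m * p) ^ m'))"
    by (metis (no_types, lifting) mult.left_commute mult_le_mono2)
  also have "\<dots> \<le> ?m * card (Triv p ?m lo hi)" using A by (rule mult_le_mono2)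
  finally have F: "KK ?m * cc m' * (hi - lo - ?m * p) ^ ?m \<le> ?m * card (Triv p ?m lo hi)" .
  have e: "?m * cc ?m = KK ?m * cc m'" using cc_rec[of ?m] by simp
  have "?m * (cc ?m * (hi - lo - ?m * p) ^ ?m) = KK ?m * cc m' * (hi - lo - ?m * p) ^ ?m"
    by (simp only: mult.assoc[symmetric] e)
  then have "?m * (cc ?m * (hi - lo - ?m * p) ^ ?m) \<le> ?m * card (Triv p ?m lo hi)" using F by simp
  then show ?case by (simp only: Suc_mult_le_cancel1)
qed

primrec EH :: "nat \<Rightarrow> nat \<times> nat" where
  "EH 0 = (0, 0)"
| "EH (Suc m) = (KK (Suc m) * (fst (EH m) + snd (EH m)), KK (Suc m) * (cc m + fst (EH m)))"

lemma pow_mono_exp: "(x::nat) \<ge> 1 \<Longrightarrow> i \<le> j \<Longrightarrow> x ^ i \<le> x ^ j"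
  by (simp add: power_increasing)

lemma TrivC_empty: "m \<ge> 1 \<Longrightarrow> hi \<le> a \<Longrightarrow> TrivC p m a hi = {}"
proof -
  assume "m \<ge> 1" "hi \<le> a"
  { fix w assume "w \<in> TrivC p m a hi"
    then have "length w = 2 * m" "\<forall>l\<in>set w. a \<le> fst l \<and> fst l < hi" by (auto simp: TrivC_def Triv_def wset_def)
    then have False using \<open>m \<ge> 1\<close> \<open>hi \<le> a\<close> by (cases w) auto }
  then show ?thesis by blast
qed

lemma UB: assumes p: "p \<ge> 2"
  shows "(\<forall>lo hi. card (Triv p m lo hi) \<le> cc m * (hi - lo + m * (p + 1)) ^ m + fst (EH m) * (hi - lo + m * (p + 1)) ^ (m - 1)) \<and>
         (\<forall>a hi. card (TrivC p m a hi) \<le> snd (EH m) * (hi - a + m * (p + 1)) ^ (m - 1))"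
proof (induction m)
  case 0 then show ?case by (simp add: Triv0 TrivC0 cc_def)
next
  case (Suc m')
  let ?m = "Suc m'"
  define B' where "B' = m' * (p + 1)"
  define B where "B = ?m * (p + 1)"
  define e where "e = fst (EH m')"
  define h where "h = snd (EH m')"
  define C where "C = p - 2 + B'"
  have IHN: "\<And>lo hi. card (Triv p m' lo hi) \<le> cc m' * (hi - lo + B') ^ m' + e * (hi - lo + B') ^ (m' - 1)"
    using Suc.IH unfolding B'_def e_def by blast
  have IHD: "\<And>a hi. card (TrivC p m' a hi) \<le> h * (hi - a + B') ^ (m' - 1)"
    using Suc.IH unfolding B'_def h_def by blast
  have BB: "B = B' + p + 1" unfolding B_def B'_def by simp
  have partN: "card (Triv p ?m lo hi) \<le> cc ?m * (hi - lo + B) ^ ?m + fst (EH ?m) * (hi - lo + B) ^ (?m - 1)" for lo hi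
  proof -
    define L where "L = hi - lo"
    have key: "KK ?m * (card (Triv p m' (a + 1) (hi + p - 1)) + card (TrivC p m' a (hi + p - 1)))
        \<le> KK ?m * (cc m' * (hi - a + C) ^ m' + (e + h) * (L + B) ^ (m' - 1))" if a: "a \<in> {lo..<hi}" for a
    proof -
      have e1: "hi + p - 1 - (a + 1) + B' = hi - a + C" using a p unfolding C_def by auto
      have e2: "hi + p - 1 - a + B' = hi - a + C + 1" using a p unfolding C_def by auto
      have le1: "hi - a + C \<le> L + B" "hi - a + C + 1 \<le> L + B" using a p unfolding C_def L_def BB by auto
      have "card (Triv p m' (a + 1) (hi + p - 1)) \<le> cc m' * (hi - a + C) ^ m' + e * (hi - a + C) ^ (m' - 1)"
        using IHN[where lo="a + 1" and hi="hi + p - 1"] unfolding e1 .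
      moreover have "card (TrivC p m' a (hi + p - 1)) \<le> h * (hi - a + C + 1) ^ (m' - 1)"
        using IHD[where a=a and hi="hi + p - 1"] unfolding e2 .
      moreover have "e * (hi - a + C) ^ (m' - 1) \<le> e * (L + B) ^ (m' - 1)"
        using le1 by (intro mult_le_mono2 power_mono) auto
      moreover have "h * (hi - a + C + 1) ^ (m' - 1) \<le> h * (L + B) ^ (m' - 1)"
        using le1 by (intro mult_le_mono2 power_mono) auto
      moreover have "(e + h) * (L + B) ^ (m' - 1) = e * (L + B) ^ (m' - 1) + h * (L + B) ^ (m' - 1)"
        by (rule distrib_right)
      ultimately have "card (Triv p m' (a + 1) (hi + p - 1)) + card (TrivC p m' a (hi + p - 1))
          \<le> cc m' * (hi - a + C) ^ m' + (e + h) * (L + B) ^ (m' - 1)"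
        by linarith
      then show ?thesis by (rule mult_le_mono2)
    qed
    have "card (Triv p ?m lo hi) \<le> (\<Sum>a\<in>{lo..<hi}. KK ?m * (card (Triv p m' (a + 1) (hi + p - 1)) + card (TrivC p m' a (hi + p - 1))))"
      using N_upper[OF p, where m="?m" and lo=lo and hi=hi] by (simp add: KK_def mult.assoc)
    also have "\<dots> \<le> (\<Sum>a\<in>{lo..<hi}. KK ?m * (cc m' * (hi - a + C) ^ m' + (e + h) * (L + B) ^ (m' - 1)))"
      by (rule sum_mono) (rule key)
    also have "\<dots> = KK ?m * cc m' * (\<Sum>a\<in>{lo..<hi}. (hi - a + C) ^ m') + L * (KK ?m * (e + h) * (L + B) ^ (m' - 1))"
    proof -
      have "(\<Sum>a\<in>{lo..<hi}. KK ?m * (cc m' * (hi - a + C) ^ m' + (e + h) * (L + B) ^ (m' - 1))) =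
          (\<Sum>a\<in>{lo..<hi}. KK ?m * cc m' * (hi - a + C) ^ m') + (\<Sum>a\<in>{lo..<hi}. KK ?m * (e + h) * (L + B) ^ (m' - 1))"
      proof -
        have "(\<Sum>a\<in>{lo..<hi}. KK ?m * (cc m' * (hi - a + C) ^ m' + (e + h) * (L + B) ^ (m' - 1))) =
          (\<Sum>a\<in>{lo..<hi}. KK ?m * cc m' * (hi - a + C) ^ m' + KK ?m * (e + h) * (L + B) ^ (m' - 1))"
          by (rule sum.cong) (simp_all add: algebra_simps)
        then show ?thesis by (simp only: sum.distrib)
      qed
      also have "\<dots> = KK ?m * cc m' * (\<Sum>a\<in>{lo..<hi}. (hi - a + C) ^ m') + card {lo..<hi} * (KK ?m * (e + h) * (L + B) ^ (m' - 1))"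
        by (simp only: sum_distrib_left[symmetric] sum_constant of_nat_id) (simp add: ac_simps)
      finally show ?thesis by (simp add: L_def)
    qed
    also have "(\<Sum>a\<in>{lo..<hi}. (hi - a + C) ^ m') = (\<Sum>t\<in>{1..L}. (t + C) ^ m')"
      using reindex[where f="\<lambda>t. (t + C) ^ m'" and lo=lo and hi=hi] unfolding L_def by simp
    also have "KK ?m * cc m' * (\<Sum>t\<in>{1..L}. (t + C) ^ m') \<le> cc ?m * (L + B) ^ ?m"
    proof -
      have "?m * (\<Sum>t\<in>{1..L}. (t + C) ^ m') \<le> (L + C + 1) ^ ?m"
        using SU[where j=m' and L=L and C=C] by simp
      also have "\<dots> \<le> (L + B) ^ ?m" using p unfolding C_def BB by (intro power_mono) auto
      finally have "KK ?m * cc m' * (?m * (\<Sum>t\<in>{1..L}. (t + C) ^ m')) \<le> KK ?m * cc m' * (L + B) ^ ?m"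
        by (rule mult_le_mono2)
      also have "\<dots> = ?m * (cc ?m * (L + B) ^ ?m)"
        using cc_rec[of ?m] by (simp only: mult.assoc[symmetric]) simp
      finally have "?m * (KK ?m * cc m' * (\<Sum>t\<in>{1..L}. (t + C) ^ m')) \<le> ?m * (cc ?m * (L + B) ^ ?m)"
        by (simp add: algebra_simps)
      then show ?thesis by (simp only: Suc_mult_le_cancel1)
    qed
    also have "L * (KK ?m * (e + h) * (L + B) ^ (m' - 1)) \<le> KK ?m * (e + h) * (L + B) ^ m'"
    proof (cases m')
      case 0
      then have "e = 0" "h = 0" unfolding e_def h_def by auto
      then show ?thesis by simp
    next
      case (Suc k)
      have "L * (L + B) ^ k \<le> (L + B) * (L + B) ^ k" by (intro mult_le_mono1) simp
      then have "L * (L + B) ^ (m' - 1) \<le> (L + B) ^ m'" using Suc by simp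
      then show ?thesis by (metis mult.left_commute mult_le_mono2)
    qed
    finally show ?thesis unfolding L_def e_def h_def by simp
  qed
  have partD: "card (TrivC p ?m a hi) \<le> snd (EH ?m) * (hi - a + B) ^ (?m - 1)" for a hi
  proof (cases "hi \<le> a")
    case True
    then show ?thesis using TrivC_empty[of ?m hi a p] by simp
  next
    case False
    define Q where "Q = hi + p - 1 - a + B'"
    have Q1: "Q \<ge> 1" "Q \<le> hi - a + B" using False p unfolding Q_def BB by auto
    have "card (TrivC p ?m a hi) \<le> KK ?m * card (Triv p m' a (hi + p - 1))"
      using D_upper[OF p, where m="?m" and a=a and hi=hi] by (simp add: KK_def mult.assoc)
    also have "\<dots> \<le> KK ?m * (cc m' * Q ^ m' + e * Q ^ (m' - 1))"
      using IHN[where lo=a and hi="hi + p - 1"] unfolding Q_def by (rule mult_le_mono2)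
    also have "\<dots> \<le> KK ?m * (cc m' * Q ^ m' + e * Q ^ m')"
      using pow_mono_exp[OF Q1(1), of "m' - 1" m'] by (intro mult_le_mono2 add_le_mono) auto
    also have "\<dots> = KK ?m * (cc m' + e) * Q ^ m'" by (simp add: algebra_simps)
    also have "\<dots> \<le> KK ?m * (cc m' + e) * (hi - a + B) ^ m'" using Q1 by (intro mult_le_mono2 power_mono) auto
    finally show ?thesis unfolding e_def by simp
  qed
  show ?case using partN partD unfolding B_def by blast
qed



lemma lim_N:
  assumes p: "p \<ge> 2"
  shows "(\<lambda>n. real (card (Triv p m 0 n)) / real n ^ m) \<longlonglongrightarrow> real (cc m)"
proof (rule tendsto_sandwich)
  define A where "A = m * p"
  define B where "B = m * (p + 1)"
  define E where "E = fst (EH m)"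
  show "\<forall>\<^sub>F n in sequentially. real (cc m) * (1 - real A / real n) ^ m \<le> real (card (Triv p m 0 n)) / real n ^ m"
  proof (rule eventually_sequentiallyI[of "A + 1"])
    fix n assume n: "A + 1 \<le> n"
    have "cc m * (n - A) ^ m \<le> card (Triv p m 0 n)" using LB[OF p, where m=m and lo=0 and hi=n] unfolding A_def by simp
    then have "real (cc m) * (real n - real A) ^ m \<le> real (card (Triv p m 0 n))"
      using n by (metis of_nat_diff of_nat_le_iff of_nat_mult of_nat_power add_leD1)
    moreover have "(1 - real A / real n) ^ m = (real n - real A) ^ m / real n ^ m"
    proof -
      have "1 - real A / real n = (real n - real A) / real n" using n by (simp add: diff_divide_distrib)
      then show ?thesis by (simp only: power_divide)
    qed
    moreover have "real n > 0" using n by simp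
    ultimately show "real (cc m) * (1 - real A / real n) ^ m \<le> real (card (Triv p m 0 n)) / real n ^ m"
      by (simp add: divide_right_mono)
  qed
  show "\<forall>\<^sub>F n in sequentially. real (card (Triv p m 0 n)) / real n ^ m \<le>
      real (cc m) * (1 + real B / real n) ^ m + real E * ((real n + real B) ^ (m - 1) / real n ^ m)"
  proof (rule eventually_sequentiallyI[of 1])
    fix n :: nat assume n: "1 \<le> n"
    have "card (Triv p m 0 n) \<le> cc m * (n + B) ^ m + E * (n + B) ^ (m - 1)"
    proof -
      have "\<forall>lo hi. card (Triv p m lo hi) \<le> cc m * (hi - lo + m * (p + 1)) ^ m + fst (EH m) * (hi - lo + m * (p + 1)) ^ (m - 1)"
        using UB[OF p, where m=m] by blast
      then have "card (Triv p m 0 n) \<le> cc m * (n - 0 + m * (p + 1)) ^ m + fst (EH m) * (n - 0 + m * (p + 1)) ^ (m - 1)"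
        by blast
      then show ?thesis unfolding B_def E_def by simp
    qed
    then have "real (card (Triv p m 0 n)) \<le> real (cc m) * (real n + real B) ^ m + real E * (real n + real B) ^ (m - 1)"
      by (metis of_nat_add of_nat_le_iff of_nat_mult of_nat_power)
    moreover have "(1 + real B / real n) ^ m = (real n + real B) ^ m / real n ^ m"
    proof -
      have "1 + real B / real n = (real n + real B) / real n" using n by (simp add: add_divide_distrib)
      then show ?thesis by (simp only: power_divide)
    qed
    moreover have "real n > 0" using n by simp
    ultimately have "real (card (Triv p m 0 n)) / real n ^ m \<le>
      (real (cc m) * (real n + real B) ^ m + real E * (real n + real B) ^ (m - 1)) / real n ^ m"
      by (intro divide_right_mono) simp_all
    also have "\<dots> = real (cc m) * (1 + real B / real n) ^ m + real E * ((real n + real B) ^ (m - 1) / real n ^ m)"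
      using \<open>(1 + real B / real n) ^ m = (real n + real B) ^ m / real n ^ m\<close> by (simp add: add_divide_distrib)
    finally show "real (card (Triv p m 0 n)) / real n ^ m \<le>
      real (cc m) * (1 + real B / real n) ^ m + real E * ((real n + real B) ^ (m - 1) / real n ^ m)" .
  qed
  have l1: "(\<lambda>n. 1 - real A / real n) \<longlonglongrightarrow> 1" by (auto intro!: tendsto_eq_intros lim_const_over_n)
  show "(\<lambda>n. real (cc m) * (1 - real A / real n) ^ m) \<longlonglongrightarrow> real (cc m)"
    using tendsto_mult[OF tendsto_const tendsto_power[OF l1, of m], of "real (cc m)"] by simp
  have l2: "(\<lambda>n. 1 + real B / real n) \<longlonglongrightarrow> 1" by (auto intro!: tendsto_eq_intros lim_const_over_n)
  have l3: "(\<lambda>n. real E * ((real n + real B) ^ (m - 1) / real n ^ m)) \<longlonglongrightarrow> 0"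
  proof (cases m)
    case 0
    then have "E = 0" unfolding E_def by simp
    then show ?thesis by simp
  next
    case (Suc k)
    have ev: "\<forall>\<^sub>F n in sequentially. real E * ((1 + real B / real n) ^ k * (1 / real n)) = real E * ((real n + real B) ^ (m - 1) / real n ^ m)"
    proof (rule eventually_sequentiallyI[of 1])
      fix n :: nat assume "1 \<le> n"
      then have "real n \<noteq> 0" by simp
      then have "1 + real B / real n = (real n + real B) / real n" by (simp add: add_divide_distrib)
      then have "(1 + real B / real n) ^ k * (1 / real n) = (real n + real B) ^ k / real n ^ k * (1 / real n)"
        by (simp only: power_divide)
      also have "\<dots> = (real n + real B) ^ k / real n ^ Suc k" by simp
      finally show "real E * ((1 + real B / real n) ^ k * (1 / real n)) = real E * ((real n + real B) ^ (m - 1) / real n ^ m)"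
        using Suc by simp
    qed
    have "(\<lambda>n. real E * ((1 + real B / real n) ^ k * (1 / real n))) \<longlonglongrightarrow> real E * (1 ^ k * 0)"
      by (intro tendsto_mult tendsto_const tendsto_power l2 lim_1_over_n)
    then have "(\<lambda>n. real E * ((1 + real B / real n) ^ k * (1 / real n))) \<longlonglongrightarrow> 0" by simp
    then show ?thesis using ev by (rule Lim_transform_eventually)
  qed
  show "(\<lambda>n. real (cc m) * (1 + real B / real n) ^ m + real E * ((real n + real B) ^ (m - 1) / real n ^ m)) \<longlonglongrightarrow> real (cc m)"
    using tendsto_add[OF tendsto_mult[OF tendsto_const tendsto_power[OF l2, of m], of "real (cc m)"] l3] by simp
qed



lemma cls_eq: "fp_class p u = fp_class p v \<longleftrightarrow> fp_eq p u v"
proof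
  assume h: "fp_class p u = fp_class p v"
  have "v \<in> fp_class p v" by (simp add: fp_class_def)
  then have "v \<in> fp_class p u" using h by simp
  then show "fp_eq p u v" by (simp add: fp_class_def)
next
  assume h: "fp_eq p u v"
  show "fp_class p u = fp_class p v"
    unfolding fp_class_def using h fp_eq_sym fp_eq_trans by blast
qed

lemma mult_cls: "fp_mult p (fp_class p a) (fp_class p b) = fp_class p (a @ b)"
proof -
  define a' where "a' = (SOME x. x \<in> fp_class p a)"
  define b' where "b' = (SOME x. x \<in> fp_class p b)"
  have "a' \<in> fp_class p a" unfolding a'_def by (rule someI[of _ a]) (simp add: fp_class_def)
  moreover have "b' \<in> fp_class p b" unfolding b'_def by (rule someI[of _ b]) (simp add: fp_class_def)
  ultimately have "fp_eq p a a'" "fp_eq p b b'" by (auto simp: fp_class_def)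
  then have "fp_eq p (a' @ b') (a @ b)" by (intro fp_eq_app) (auto intro: fp_eq_sym)
  then show ?thesis unfolding fp_mult_def a'_def[symmetric] b'_def[symmetric] by (simp add: cls_eq)
qed

definition GG :: "nat \<Rightarrow> nat \<Rightarrow> nat \<Rightarrow> fword set \<Rightarrow> complex" where
  "GG p n d C = (\<Sum>w\<in>wset 0 n d. if fp_class p w = C then 1 else 0)"

lemma sum_fiber:
  fixes F :: "'b \<Rightarrow> complex"
  assumes "finite S" "finite W" "g ` W \<subseteq> S"
  shows "(\<Sum>A\<in>S. (\<Sum>w\<in>W. if g w = A then 1 else 0) * F A) = (\<Sum>w\<in>W. F (g w))"
proof -
  have "(\<Sum>A\<in>S. (\<Sum>w\<in>W. if g w = A then 1 else 0) * F A) = (\<Sum>A\<in>S. \<Sum>w\<in>W. if A = g w then F A else 0)"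
  proof (rule sum.cong[OF refl])
    fix A
    have "(\<Sum>w\<in>W. if g w = A then 1 else 0) * F A = (\<Sum>w\<in>W. (if g w = A then 1 else 0) * F A)"
      by (rule sum_distrib_right)
    also have "\<dots> = (\<Sum>w\<in>W. if A = g w then F A else 0)" by (rule sum.cong) auto
    finally show "(\<Sum>w\<in>W. if g w = A then 1 else 0) * F A = (\<Sum>w\<in>W. if A = g w then F A else 0)" .
  qed
  also have "\<dots> = (\<Sum>w\<in>W. \<Sum>A\<in>S. if A = g w then F A else 0)" by (rule sum.swap)
  also have "\<dots> = (\<Sum>w\<in>W. F (g w))" using assms by (intro sum.cong) (auto simp: sum.delta)
  finally show ?thesis .
qed

lemma GG_nz: "GG p n d C \<noteq> 0 \<Longrightarrow> C \<in> fp_class p ` wset 0 n d"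
proof (rule ccontr)
  assume "GG p n d C \<noteq> 0" "C \<notin> fp_class p ` wset 0 n d"
  then have "\<forall>w\<in>wset 0 n d. fp_class p w \<noteq> C" by auto
  then have "GG p n d C = 0" unfolding GG_def by (intro sum.neutral) auto
  with \<open>GG p n d C \<noteq> 0\<close> show False by simp
qed

lemma wset1: "wset 0 n 1 = (\<lambda>x. [x]) ` ({..<n} \<times> UNIV)"
proof
  show "wset 0 n 1 \<subseteq> (\<lambda>x. [x]) ` ({..<n} \<times> UNIV)"
  proof
    fix w assume "w \<in> wset 0 n 1"
    then obtain l where "w = [l]" "fst l < n" by (auto simp: wset_def length_Suc_conv)
    then show "w \<in> (\<lambda>x. [x]) ` ({..<n} \<times> UNIV)" by (cases l) auto
  qed
qed (auto simp: wset_def)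

lemma sum_wset1: "(\<Sum>w\<in>wset 0 n 1. F w) = (\<Sum>i<n. (F [(i, True)] + F [(i, False)]) :: complex)"
proof -
  have "inj_on (\<lambda>x. [x]) ({..<n} \<times> (UNIV :: bool set))" by (auto simp: inj_on_def)
  then have "(\<Sum>w\<in>wset 0 n 1. F w) = (\<Sum>x\<in>{..<n} \<times> UNIV. F ((\<lambda>x. [x]) x))"
    unfolding wset1 by (rule sum.reindex[unfolded comp_def])
  also have "\<dots> = (\<Sum>i<n. \<Sum>b\<in>UNIV. F [(i, b)])" by (simp add: sum.cartesian_product)
  also have "\<dots> = (\<Sum>i<n. (F [(i, True)] + F [(i, False)]))" by (simp add: UNIV_bool add.commute)
  finally show ?thesis .
qed

lemma wsetSuc: "wset 0 n (Suc d) = (\<lambda>(x, y). x @ y) ` (wset 0 n 1 \<times> wset 0 n d)"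
proof
  show "wset 0 n (Suc d) \<subseteq> (\<lambda>(x, y). x @ y) ` (wset 0 n 1 \<times> wset 0 n d)"
  proof
    fix w assume w: "w \<in> wset 0 n (Suc d)"
    have w2: "length w = Suc d" "\<forall>x\<in>set w. fst x < n" using w unfolding wset_def by auto
    obtain l r where lr: "w = l # r" using w2(1) by (cases w) auto
    have a: "w = [l] @ r" using lr by simp
    have b: "[l] \<in> wset 0 n 1" using w2 lr unfolding wset_def by simp
    have c: "r \<in> wset 0 n d" using w2 lr unfolding wset_def by simp
    show "w \<in> (\<lambda>(x, y). x @ y) ` (wset 0 n 1 \<times> wset 0 n d)"
      using a b c by (intro image_eqI[of _ _ "([l], r)"]) simp_all
  qed
next
  show "(\<lambda>(x, y). x @ y) ` (wset 0 n 1 \<times> wset 0 n d) \<subseteq> wset 0 n (Suc d)"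
  proof
    fix w assume "w \<in> (\<lambda>(x, y). x @ y) ` (wset 0 n 1 \<times> wset 0 n d)"
    then obtain z where z: "z \<in> wset 0 n 1 \<times> wset 0 n d" "w = (\<lambda>(x, y). x @ y) z" by (rule imageE)
    obtain x y where "z = (x, y)" by (cases z)
    then have "w = x @ y" "length x = 1" "length y = d" "\<forall>l\<in>set x. fst l < n" "\<forall>l\<in>set y. fst l < n"
      using z unfolding wset_def by auto
    then show "w \<in> wset 0 n (Suc d)" unfolding wset_def by auto
  qed
qed

lemma sum_wsetSuc: "(\<Sum>w\<in>wset 0 n (Suc d). F w) = (\<Sum>x\<in>wset 0 n 1. \<Sum>y\<in>wset 0 n d. (F (x @ y) :: complex))"
proof -
  have "inj_on (\<lambda>(x, y). x @ y) (wset 0 n 1 \<times> wset 0 n d)"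
  proof (rule inj_onI)
    fix z1 z2 assume "z1 \<in> wset 0 n 1 \<times> wset 0 n d" "z2 \<in> wset 0 n 1 \<times> wset 0 n d"
      "(\<lambda>(x, y). x @ y) z1 = (\<lambda>(x, y). x @ y) z2"
    then obtain x1 y1 x2 y2 where z: "z1 = (x1, y1)" "z2 = (x2, y2)" "length x1 = 1" "length x2 = 1" "x1 @ y1 = x2 @ y2"
      by (cases z1, cases z2) (simp add: wset_def)
    then have "x1 = x2 \<and> y1 = y2" by (metis append_eq_append_conv)
    then show "z1 = z2" using z by simp
  qed
  then have "(\<Sum>w\<in>wset 0 n (Suc d). F w) = (\<Sum>z\<in>wset 0 n 1 \<times> wset 0 n d. F ((\<lambda>(x, y). x @ y) z))"
    unfolding wsetSuc by (rule sum.reindex[unfolded comp_def])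
  also have "\<dots> = (\<Sum>(x, y)\<in>wset 0 n 1 \<times> wset 0 n d. F (x @ y))" by (rule sum.cong) auto
  also have "\<dots> = (\<Sum>x\<in>wset 0 n 1. \<Sum>y\<in>wset 0 n d. F (x @ y))" by (rule sum.cartesian_product[symmetric])
  finally show ?thesis .
qed


definition qq :: "nat \<Rightarrow> complex" where
  "qq n = complex_of_real (sqrt 2) * complex_of_real (sqrt (real n))"

lemma qq_nz: "n \<ge> 1 \<Longrightarrow> qq n \<noteq> 0"
  by (simp add: qq_def)

lemma fp_s_eq: "fp_s p n = (\<lambda>C. GG p n 1 C / qq n)"
proof
  fix C
  have "fp_s p n C = (\<Sum>i<n. (fp_basis p [(i, True)] C + fp_basis p [(i, False)] C) / complex_of_real (sqrt 2)) / complex_of_real (sqrt (real n))"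
    by (simp add: fp_s_def fp_a_def)
  also have "\<dots> = (\<Sum>i<n. (fp_basis p [(i, True)] C + fp_basis p [(i, False)] C)) / qq n"
    by (simp add: sum_divide_distrib[symmetric] qq_def)
  also have "(\<Sum>i<n. (fp_basis p [(i, True)] C + fp_basis p [(i, False)] C)) = GG p n 1 C"
    unfolding GG_def sum_wset1 by (rule sum.cong) (auto simp: fp_basis_def)
  finally show "fp_s p n C = GG p n 1 C / qq n" .
qed

lemma wset0: "wset 0 n 0 = {[]}"
  by (auto simp: wset_def)

lemma finite_wset0: "finite (wset 0 n d)" by (rule finite_wset)

lemma fp_pow_eq: assumes n: "n \<ge> 1" shows "fp_pow p (fp_s p n) d = (\<lambda>C. GG p n d C / qq n ^ d)"
proof (induction d)
  case 0
  show ?case by (auto simp: GG_def wset0 fp_basis_def)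
next
  case (Suc d)
  let ?F1 = "\<lambda>A. GG p n 1 A / qq n" and ?Fd = "\<lambda>B. GG p n d B / qq n ^ d"
  let ?S1 = "fp_class p ` wset 0 n 1" and ?S2 = "fp_class p ` wset 0 n d"
  have fin: "finite ?S1" "finite ?S2" using finite_wset by auto
  have q: "qq n \<noteq> 0" using qq_nz[OF n] .
  show ?case
  proof
    fix C
    let ?T = "\<lambda>A B. if fp_mult p A B = C then ?F1 A * ?Fd B else 0"
    have "fp_pow p (fp_s p n) (Suc d) = fp_conv p ?F1 ?Fd"
      using Suc.IH by (simp only: fp_pow.simps fp_s_eq)
    then have "fp_pow p (fp_s p n) (Suc d) C = (\<Sum>A\<in>{A. ?F1 A \<noteq> 0}. \<Sum>B\<in>{B. ?Fd B \<noteq> 0}. ?T A B)"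
      by (simp only: fp_conv_def)
    also have "\<dots> = (\<Sum>A\<in>{A. ?F1 A \<noteq> 0}. \<Sum>B\<in>?S2. ?T A B)"
    proof (rule sum.cong[OF refl])
      fix A
      show "(\<Sum>B\<in>{B. ?Fd B \<noteq> 0}. ?T A B) = (\<Sum>B\<in>?S2. ?T A B)"
        by (rule sum.mono_neutral_left[OF fin(2)]) (auto intro: GG_nz)
    qed
    also have "\<dots> = (\<Sum>A\<in>?S1. \<Sum>B\<in>?S2. ?T A B)"
    proof (rule sum.mono_neutral_left[OF fin(1)])
      show "{A. ?F1 A \<noteq> 0} \<subseteq> ?S1"
      proof
        fix A assume "A \<in> {A. ?F1 A \<noteq> 0}"
        then have "GG p n 1 A \<noteq> 0" by auto
        then show "A \<in> ?S1" by (rule GG_nz)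
      qed
      show "\<forall>A\<in>?S1 - {A. ?F1 A \<noteq> 0}. (\<Sum>B\<in>?S2. ?T A B) = 0"
      proof
        fix A assume "A \<in> ?S1 - {A. ?F1 A \<noteq> 0}"
        then have z: "?F1 A = 0" by blast
        show "(\<Sum>B\<in>?S2. ?T A B) = 0" by (simp only: z mult_zero_left if_cancel sum.neutral_const)
      qed
    qed
    also have "\<dots> = (\<Sum>A\<in>?S1. \<Sum>B\<in>?S2. GG p n 1 A * (GG p n d B * (if fp_mult p A B = C then 1 else 0)) / qq n ^ Suc d)"
    proof (intro sum.cong refl)
      fix A B
      show "?T A B = GG p n 1 A * (GG p n d B * (if fp_mult p A B = C then 1 else 0)) / qq n ^ Suc d"
        by (cases "fp_mult p A B = C") simp_all
    qed
    also have "\<dots> = (\<Sum>A\<in>?S1. GG p n 1 A * (\<Sum>B\<in>?S2. GG p n d B * (if fp_mult p A B = C then 1 else 0))) / qq n ^ Suc d"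
      by (simp only: sum_divide_distrib[symmetric] sum_distrib_left[symmetric])
    also have "(\<Sum>A\<in>?S1. GG p n 1 A * (\<Sum>B\<in>?S2. GG p n d B * (if fp_mult p A B = C then 1 else 0))) =
        (\<Sum>A\<in>?S1. GG p n 1 A * (\<Sum>w2\<in>wset 0 n d. if fp_mult p A (fp_class p w2) = C then 1 else 0))"
    proof (rule sum.cong[OF refl])
      fix A
      have "(\<Sum>B\<in>?S2. GG p n d B * (if fp_mult p A B = C then 1 else 0)) = (\<Sum>w2\<in>wset 0 n d. if fp_mult p A (fp_class p w2) = C then 1 else 0)"
        unfolding GG_def by (rule sum_fiber[OF fin(2) finite_wset]) simp
      then show "GG p n 1 A * (\<Sum>B\<in>?S2. GG p n d B * (if fp_mult p A B = C then 1 else 0)) =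
        GG p n 1 A * (\<Sum>w2\<in>wset 0 n d. if fp_mult p A (fp_class p w2) = C then 1 else 0)" by simp
    qed
    also have "\<dots> = (\<Sum>w1\<in>wset 0 n 1. \<Sum>w2\<in>wset 0 n d. if fp_mult p (fp_class p w1) (fp_class p w2) = C then 1 else 0)"
      unfolding GG_def by (rule sum_fiber[OF fin(1) finite_wset]) simp
    also have "\<dots> = GG p n (Suc d) C"
      unfolding GG_def sum_wsetSuc mult_cls ..
    finally show "fp_pow p (fp_s p n) (Suc d) C = GG p n (Suc d) C / qq n ^ Suc d" .
  qed
qed



lemma GG_triv: "GG p n d (fp_class p []) = of_nat (card {w \<in> wset 0 n d. fp_eq p w []})"
proof -
  have "GG p n d (fp_class p []) = (\<Sum>w\<in>wset 0 n d. if fp_eq p w [] then 1 else 0)"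
    unfolding GG_def cls_eq ..
  also have "\<dots> = (\<Sum>w\<in>{w \<in> wset 0 n d. fp_eq p w []}. 1)"
    by (rule sum.inter_filter[symmetric]) (rule finite_wset)
  also have "\<dots> = of_nat (card {w \<in> wset 0 n d. fp_eq p w []})" by simp
  finally show ?thesis .
qed

lemma trace_eq: "n \<ge> 1 \<Longrightarrow> fp_trace p (fp_pow p (fp_s p n) d) = of_nat (card {w \<in> wset 0 n d. fp_eq p w []}) / qq n ^ d"
  by (simp add: fp_trace_def fp_pow_eq GG_triv)

lemma ecnt_parity: "even (ecnt (\<lambda>_. True) w) \<longleftrightarrow> even (length w)"
  by (induction w) auto

lemma odd_empty: "odd d \<Longrightarrow> {w \<in> wset 0 n d. fp_eq p w []} = {}"
proof -
  assume "odd d"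
  { fix w assume "w \<in> wset 0 n d" "fp_eq p w []"
    then have "ecnt (\<lambda>_. True) w = 0" using fp_eq_tot by fastforce
    then have "even (length w)" using ecnt_parity by (metis even_zero)
    with \<open>w \<in> wset 0 n d\<close> \<open>odd d\<close> have False by (simp add: wset_def) }
  then show ?thesis by blast
qed

lemma qq_pow: "qq n ^ (2 * m) = complex_of_real ((2 * real n) ^ m)"
proof -
  have "qq n ^ (2 * m) = complex_of_real ((sqrt 2 * sqrt (real n)) ^ 2) ^ m"
    by (simp add: qq_def power_mult)
  also have "(sqrt 2 * sqrt (real n)) ^ 2 = 2 * real n" by (simp add: power_mult_distrib)
  finally show ?thesis by simp
qed

theorem theorem1:
  fixes p d :: nat
  assumes "p \<ge> 2"
  shows "(\<lambda>n. fp_trace p (fp_pow p (fp_s p n) d)) \<longlonglongrightarrow>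
           (if even d then of_nat (dfact (d - 1)) else 0)"
proof (cases "even d")
  case False
  have "\<forall>\<^sub>F n in sequentially. 0 = fp_trace p (fp_pow p (fp_s p n) d)"
  proof (rule eventually_sequentiallyI[of 1])
    fix n :: nat assume "1 \<le> n"
    then show "0 = fp_trace p (fp_pow p (fp_s p n) d)" using trace_eq[of n p d] odd_empty[OF False, of n p] by simp
  qed
  then have "(\<lambda>n. fp_trace p (fp_pow p (fp_s p n) d)) \<longlonglongrightarrow> 0"
    by (rule Lim_transform_eventually[OF tendsto_const])
  then show ?thesis using False by simp
next
  case True
  then obtain m where d: "d = 2 * m" by blast
  have lim: "(\<lambda>n. real (card (Triv p m 0 n)) / real n ^ m / 2 ^ m) \<longlonglongrightarrow> real (cc m) / 2 ^ m"
    by (intro tendsto_divide lim_N[OF assms] tendsto_const) simp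
  have "real (cc m) / 2 ^ m = real (dfact (d - 1))" unfolding cc_def d by simp
  then have lim': "(\<lambda>n. complex_of_real (real (card (Triv p m 0 n)) / real n ^ m / 2 ^ m)) \<longlonglongrightarrow> of_nat (dfact (d - 1))"
    using tendsto_of_real[OF lim, where 'a=complex] by simp
  have ev: "\<forall>\<^sub>F n in sequentially. complex_of_real (real (card (Triv p m 0 n)) / real n ^ m / 2 ^ m) = fp_trace p (fp_pow p (fp_s p n) d)"
  proof (rule eventually_sequentiallyI[of 1])
    fix n :: nat assume n: "1 \<le> n"
    have "fp_trace p (fp_pow p (fp_s p n) d) = of_nat (card {w \<in> wset 0 n (2 * m). fp_eq p w []}) / qq n ^ (2 * m)"
      using trace_eq[OF n, of p d] unfolding d .
    also have "\<dots> = of_nat (card (Triv p m 0 n)) / complex_of_real ((2 * real n) ^ m)"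
      unfolding qq_pow Triv_def ..
    also have "\<dots> = complex_of_real (real (card (Triv p m 0 n)) / real n ^ m / 2 ^ m)"
      by (simp add: power_mult_distrib field_simps)
    finally show "complex_of_real (real (card (Triv p m 0 n)) / real n ^ m / 2 ^ m) = fp_trace p (fp_pow p (fp_s p n) d)" by simp
  qed
  show ?thesis using Lim_transform_eventually[OF lim' ev] True by simp
qed

end
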